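(* Let $\langle k\rangle,\langle k^2\rangle,\langle k^3\rangle$ be the first three moments of a degree distribution on the nonnegative integers, with $\langle k\rangle>0$, $\langle k^2\rangle-\langle k\rangle^2>0$ and $\langle k^2\rangle>\langle k\rangle$. Define $$\alpha=\frac{\langle k^2\rangle^2-\langle k\rangle\langle k^3\rangle}{\langle k^2\rangle-\langle k\rangle^2},\qquad \beta=\frac{\langle k^3\rangle-\langle k^2\rangle\langle k\rangle}{\langle k^2\rangle-\langle k\rangle^2}-1,$$ and for a parameter $\delta>0$ consider the system of ODEs \begin{align*} \dot w&=\langle k\rangle\delta x-w,\\ \dot x&=z-(\delta+1)x+\frac{\alpha\delta}{\langle k\rangle}\cdot\frac{(1-w)x(1-3x-z)}{(1-x-z)^2}+\beta\delta\cdot\frac{x(1-3x-z)}{1-x-z},\\ \dot z&=-2z+2\delta x+\frac{2\alpha\delta}{\langle k\rangle}\cdot\frac{(1-w)x^2}{(1-x-z)^2}+2\beta\delta\cdot\frac{x^2}{1-x-z}. \end{align*} Let $\delta_c=\dfrac{\langle k\rangle}{\langle k^2\rangle-\langle k\rangle}$. Then the disease-free equilibrium $(w,x,z)=(0,0,0)$ is locally asymptotically stable if $\delta<\delta_c$ and unstable if $\delta>\delta_c$.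
   Context: This is the nondimensionalized super compact pairwise (SCPW) SIS epidemic model on a network: $w$ is the proportion of infectious nodes, $x$, $z$ are the proportions of susceptible–infectious and infectious–infectious links, and $\delta=\tau/\gamma$ is the ratio of transmission rate to recovery rate. The model arises with the conservation laws $v+w=1$ and $2x+y+z=1$ ($v$ the susceptible proportion, $y$ the susceptible–susceptible link proportion), which have been used to eliminate $v$ and $y$. Stability refers to local stability of the equilibrium of the ODE system. *)

theory Defs
  imports "HOL-Analysis.Analysis"
begin

definition ode_solution :: "('a::real_normed_vector \<Rightarrow> 'a) \<Rightarrow> (real \<Rightarrow> 'a) \<Rightarrow> real \<Rightarrow> bool" where
  "ode_solution f y T \<longleftrightarrow> (\<forall>t\<in>{0..T}. (y has_vector_derivative f (y t)) (at t within {0..T}))"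

definition lyap_stable :: "('a::real_normed_vector \<Rightarrow> 'a) \<Rightarrow> 'a \<Rightarrow> bool" where
  "lyap_stable f e \<longleftrightarrow> f e = 0 \<and>
     (\<forall>\<epsilon>>0. \<exists>\<eta>>0. \<forall>y T. ode_solution f y T \<and> dist (y 0) e < \<eta> \<longrightarrow>
        (\<forall>t\<in>{0..T}. dist (y t) e < \<epsilon>))"

definition loc_asym_stable :: "('a::real_normed_vector \<Rightarrow> 'a) \<Rightarrow> 'a \<Rightarrow> bool" where
  "loc_asym_stable f e \<longleftrightarrow> lyap_stable f e \<and>
     (\<exists>\<eta>>0. \<forall>y. (\<forall>T\<ge>0. ode_solution f y T) \<and> dist (y 0) e < \<eta> \<longrightarrow> (y \<longlongrightarrow> e) at_top)"

definition eq_unstable :: "('a::real_normed_vector \<Rightarrow> 'a) \<Rightarrow> 'a \<Rightarrow> bool" where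
  "eq_unstable f e \<longleftrightarrow> f e = 0 \<and> \<not> lyap_stable f e"

definition scpw_field :: "real \<Rightarrow> real \<Rightarrow> real \<Rightarrow> real \<Rightarrow> real \<times> real \<times> real \<Rightarrow> real \<times> real \<times> real" where
  "scpw_field k1 \<alpha> \<beta> \<delta> s = (case s of (w, x, z) \<Rightarrow>
     (k1 * \<delta> * x - w,
      z - (\<delta> + 1) * x + (\<alpha> * \<delta> / k1) * ((1 - w) * x * (1 - 3*x - z) / (1 - x - z)^2)
        + \<beta> * \<delta> * (x * (1 - 3*x - z) / (1 - x - z)),
      - 2 * z + 2 * \<delta> * x + (2 * \<alpha> * \<delta> / k1) * ((1 - w) * x^2 / (1 - x - z)^2)
        + 2 * \<beta> * \<delta> * (x^2 / (1 - x - z))))"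

end

theory Submission
  imports Defs
begin

lemma mono_deriv:
  fixes h h' :: "real \<Rightarrow> real"
  assumes "a \<le> b"
    and d: "\<And>t. t \<in> {a..b} \<Longrightarrow> (h has_real_derivative h' t) (at t within {a..b})"
    and nn: "\<And>t. t \<in> {a..b} \<Longrightarrow> h' t \<ge> 0"
  shows "h a \<le> h b"
proof (rule DERIV_nonneg_imp_increasing_open[OF assms(1)])
  show "continuous_on {a..b} h"
    unfolding continuous_on_eq_continuous_within using d DERIV_continuous by blast
  fix x assume "a < x" "x < b"
  then have "(h has_real_derivative h' x) (at x)"
    using d[of x] at_within_Icc_at[of a x b] by auto
  then show "\<exists>y. DERIV h x :> y \<and> 0 \<le> y" using nn[of x] \<open>a < x\<close> \<open>x < b\<close> by auto
qed

lemma chain_V: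
  fixes y :: "real \<Rightarrow> 'a::real_normed_vector" and V :: "'a \<Rightarrow> real"
  assumes "(y has_vector_derivative D) (at t within S)"
    and "(V has_derivative V') (at (y t))"
  shows "((\<lambda>s. V (y s)) has_real_derivative V' D) (at t within S)"
proof -
  have "((V \<circ> y) has_vector_derivative (V' D)) (at t within S)"
    by (rule vector_derivative_diff_chain_within[OF assms(1) has_derivative_at_withinI[OF assms(2)]])
  then show ?thesis by (simp add: has_real_derivative_iff_has_vector_derivative o_def)
qed

lemma first_exit:
  fixes g :: "real \<Rightarrow> real"
  assumes cont: "continuous_on {0..T} g" and g0: "g 0 < e" and t0: "t0 \<in> {0..T}" "g t0 \<ge> e"
  shows "\<exists>\<tau>\<in>{0..T}. g \<tau> = e \<and> (\<forall>s\<in>{0..\<tau>}. g s \<le> e)"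
proof -
  define S where "S = {t \<in> {0..T}. e \<le> g t}"
  have cS: "closed S" unfolding S_def
    by (rule continuous_on_closed_Collect_le[OF continuous_on_const cont]) simp
  have neS: "S \<noteq> {}" using t0 unfolding S_def by auto
  have bS: "bdd_below S" unfolding S_def by (auto intro: bdd_belowI[of _ 0])
  define \<tau> where "\<tau> = Inf S"
  have tS: "\<tau> \<in> S" unfolding \<tau>_def by (rule closed_contains_Inf[OF neS bS cS])
  have below: "g s < e" if "s \<in> {0..T}" "s < \<tau>" for s
  proof (rule ccontr)
    assume "\<not> g s < e"
    then have "s \<in> S" using that unfolding S_def by auto
    then have "\<tau> \<le> s" unfolding \<tau>_def using bS by (auto intro: cInf_lower)
    then show False using that by auto
  qed
  have tT: "0 \<le> \<tau>" "\<tau> \<le> T" using tS unfolding S_def by auto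
  have "continuous_on {0..\<tau>} g" using continuous_on_subset[OF cont] tT by auto
  moreover have "g 0 \<le> e" "e \<le> g \<tau>" using g0 tS unfolding S_def by auto
  ultimately obtain x where x: "0 \<le> x" "x \<le> \<tau>" "g x = e" using IVT'[of g 0 e \<tau>] tT by auto
  have "x = \<tau>" using below[of x] x tT by force
  then show ?thesis using x tT below by (intro bexI[of _ \<tau>]) (auto simp: less_eq_real_def)
qed

lemma ode_sol_cont:
  assumes "ode_solution f y T"
  shows "continuous_on {0..T} y"
  using assms unfolding ode_solution_def
  by (intro continuous_on_vector_derivative) auto

lemma ode_sol_sub:
  assumes "ode_solution f y T" "0 \<le> t" "t \<le> T"
  shows "ode_solution f y t"
  unfolding ode_solution_def
proof
  fix s assume s: "s \<in> {0..t}"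
  then have "(y has_vector_derivative f (y s)) (at s within {0..T})"
    using assms unfolding ode_solution_def by auto
  then show "(y has_vector_derivative f (y s)) (at s within {0..t})"
    by (rule has_vector_derivative_within_subset) (use assms in auto)
qed

lemma stays_in:
  fixes f :: "'a::real_normed_vector \<Rightarrow> 'a" and V :: "'a \<Rightarrow> real"
  assumes r: "r > 0" and c1: "c1 > 0" and c2: "c2 > 0"
    and Vb: "\<And>y. norm y \<le> r \<Longrightarrow> c1 * (norm y)^2 \<le> V y \<and> V y \<le> c2 * (norm y)^2"
    and Vd: "\<And>y. norm y \<le> r \<Longrightarrow> (V has_derivative V' y) (at y)"
    and Vn: "\<And>y. norm y \<le> r \<Longrightarrow> V' y (f y) \<le> 0"
    and e: "0 < e" "e \<le> r"
  shows "\<exists>\<eta>>0. \<forall>y T. ode_solution f y T \<and> norm (y 0) < \<eta> \<longrightarrow> (\<forall>t\<in>{0..T}. norm (y t) < e)"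
proof -
  define \<eta> where "\<eta> = min e (sqrt (c1 / c2) * e / 2)"
  have \<eta>pos: "\<eta> > 0" unfolding \<eta>_def using e c1 c2 by auto
  have \<eta>b: "c2 * \<eta>^2 < c1 * e^2"
  proof -
    have "\<eta> \<le> sqrt (c1 / c2) * e / 2" unfolding \<eta>_def by simp
    then have "\<eta>^2 \<le> (sqrt (c1 / c2) * e / 2)^2" using \<eta>pos by (intro power_mono) auto
    also have "\<dots> = (c1/c2) * e^2 / 4" using c1 c2 by (simp add: power_mult_distrib power_divide)
    finally have "c2 * \<eta>^2 \<le> c2 * ((c1/c2) * e^2 / 4)" by (rule mult_left_mono) (use c2 in simp)
    also have "\<dots> = c1 * e^2 / 4" using c2 by simp
    also have "\<dots> < c1 * e^2" using c1 e by simp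
    finally show ?thesis .
  qed
  show ?thesis
  proof (intro exI[of _ \<eta>] conjI allI impI ballI \<eta>pos)
    fix y T t assume H: "ode_solution f y T \<and> norm (y 0) < \<eta>" and t: "t \<in> {0..T}"
    show "norm (y t) < e"
    proof (rule ccontr)
      assume "\<not> norm (y t) < e"
      then have ge: "norm (y t) \<ge> e" by simp
      have cont: "continuous_on {0..T} (\<lambda>s. norm (y s))"
        using ode_sol_cont[of f y T] H by (intro continuous_on_norm) auto
      have y0: "norm (y 0) < e" using H unfolding \<eta>_def by auto
      obtain \<tau> where \<tau>: "\<tau> \<in> {0..T}" "norm (y \<tau>) = e" "\<forall>s\<in>{0..\<tau>}. norm (y s) \<le> e"
        using first_exit[OF cont y0 t ge] by blast
      have "V (y \<tau>) \<le> V (y 0)"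
      proof -
        have "(\<lambda>s. - V (y s)) 0 \<le> (\<lambda>s. - V (y s)) \<tau>"
        proof (rule mono_deriv[where h = "\<lambda>s. - V (y s)" and h' = "\<lambda>s. - V' (y s) (f (y s))"])
          show "0 \<le> \<tau>" using \<tau> by simp
        next
          fix s assume s: "s \<in> {0..\<tau>}"
          then have ns: "norm (y s) \<le> r" using \<tau> e by force
          have "(y has_vector_derivative f (y s)) (at s within {0..T})"
            using H s \<tau> unfolding ode_solution_def by auto
          then have "(y has_vector_derivative f (y s)) (at s within {0..\<tau>})"
            by (rule has_vector_derivative_within_subset) (use \<tau> in auto)
          from chain_V[OF this Vd[OF ns]]
          show "((\<lambda>s. - V (y s)) has_real_derivative - V' (y s) (f (y s))) (at s within {0..\<tau>})"
            by (intro derivative_intros)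
          show "0 \<le> - V' (y s) (f (y s))" using Vn[OF ns] by simp
        qed
        then show ?thesis by simp
      qed
      moreover have "V (y \<tau>) \<ge> c1 * e^2" using Vb[of "y \<tau>"] \<tau> e by auto
      moreover have "V (y 0) \<le> c2 * (norm (y 0))^2" using Vb[of "y 0"] y0 e by auto
      moreover have "c2 * (norm (y 0))^2 \<le> c2 * \<eta>^2"
        using H c2 by (intro mult_left_mono power_mono) auto
      ultimately show False using \<eta>b by linarith
    qed
  qed
qed

lemma exp_decay_tendsto:
  assumes "c > 0"
  shows "((\<lambda>t. sqrt (exp (- c * t) * K)) \<longlongrightarrow> 0) at_top"
proof -

  have "filterlim (\<lambda>t. c * t) at_top at_top"
    using assms by (intro filterlim_tendsto_pos_mult_at_top[OF tendsto_const] filterlim_ident)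
  then have "filterlim (\<lambda>t. - (c * t)) at_bot at_top"
    by (simp add: filterlim_uminus_at_bot)
  then have "filterlim (\<lambda>t. - c * t) at_bot at_top" by simp
  then have "((\<lambda>t. exp (- c * t)) \<longlongrightarrow> 0) at_top"
    by (rule filterlim_compose[OF exp_at_bot])
  then have "((\<lambda>t. sqrt (exp (- c * t) * K)) \<longlongrightarrow> sqrt (0 * K)) at_top"
    by (intro tendsto_intros)
  then show ?thesis by simp
qed

lemma stab_generic:
  fixes f :: "'a::real_normed_vector \<Rightarrow> 'a" and V :: "'a \<Rightarrow> real"
  assumes f0: "f 0 = 0" and r: "r > 0" and c1: "c1 > 0" and c2: "c2 > 0" and c3: "c3 > 0"
    and Vb: "\<And>y. norm y \<le> r \<Longrightarrow> c1 * (norm y)^2 \<le> V y \<and> V y \<le> c2 * (norm y)^2"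
    and Vd: "\<And>y. norm y \<le> r \<Longrightarrow> (V has_derivative V' y) (at y)"
    and Vdec: "\<And>y. norm y \<le> r \<Longrightarrow> V' y (f y) \<le> - c3 * V y"
  shows "loc_asym_stable f 0"
proof -
  have Vn: "V' y (f y) \<le> 0" if "norm y \<le> r" for y
  proof -
    have "0 \<le> c1 * (norm y)^2" using c1 by simp
    then have "0 \<le> V y" using Vb[OF that] by linarith
    then have "0 \<le> c3 * V y" using c3 by simp
    then show ?thesis using Vdec[OF that] by linarith
  qed
  have st: "\<exists>\<eta>>0. \<forall>y T. ode_solution f y T \<and> norm (y 0) < \<eta> \<longrightarrow> (\<forall>t\<in>{0..T}. norm (y t) < e)"
    if "0 < e" "e \<le> r" for e
    by (rule stays_in[OF r c1 c2 Vb Vd Vn that])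
  have ls: "lyap_stable f 0"
    unfolding lyap_stable_def
  proof (intro conjI f0 allI impI)
    fix \<epsilon> :: real assume "\<epsilon> > 0"
    then obtain \<eta> where "\<eta> > 0" and H: "\<forall>y T. ode_solution f y T \<and> norm (y 0) < \<eta> \<longrightarrow> (\<forall>t\<in>{0..T}. norm (y t) < min \<epsilon> r)"
      using st[of "min \<epsilon> r"] r by auto
    show "\<exists>\<eta>>0. \<forall>y T. ode_solution f y T \<and> dist (y 0) 0 < \<eta> \<longrightarrow> (\<forall>t\<in>{0..T}. dist (y t) 0 < \<epsilon>)"
    proof (intro exI[of _ \<eta>] conjI allI impI ballI)
      fix y T t assume a: "ode_solution f y T \<and> dist (y 0) 0 < \<eta>" and b: "t \<in> {0..T}"
      then have "norm (y t) < min \<epsilon> r" using H[rule_format, of y T t] by simp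
      then show "dist (y t) 0 < \<epsilon>" by simp
    qed fact
  qed
  obtain \<eta> where \<eta>: "\<eta> > 0" and H: "\<forall>y T. ode_solution f y T \<and> norm (y 0) < \<eta> \<longrightarrow> (\<forall>t\<in>{0..T}. norm (y t) < r)"
    using st[of r] r by auto
  have att: "(y \<longlongrightarrow> 0) at_top" if Y: "\<forall>T\<ge>0. ode_solution f y T" "norm (y 0) < \<eta>" for y
  proof -
    have inb: "norm (y t) < r" if "t \<ge> 0" for t
    proof -
      have "ode_solution f y t" using Y(1) that by blast
      then show ?thesis using H[rule_format, of y t t] Y(2) that by simp
    qed
    have dec: "V (y t) \<le> exp (- c3 * t) * V (y 0)" if t: "t \<ge> 0" for t
    proof -
      have "(\<lambda>s. - (exp (c3 * s) * V (y s))) 0 \<le> (\<lambda>s. - (exp (c3 * s) * V (y s))) t"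
      proof (rule mono_deriv[where h = "\<lambda>s. - (exp (c3 * s) * V (y s))"
            and h' = "\<lambda>s. - (c3 * exp (c3 * s) * V (y s) + exp (c3 * s) * V' (y s) (f (y s)))"])
        show "0 \<le> t" by fact
      next
        fix s assume s: "s \<in> {0..t}"
        then have ns: "norm (y s) \<le> r" using inb[of s] by auto
        have "(y has_vector_derivative f (y s)) (at s within {0..t})"
          using Y(1)[rule_format, OF t] s unfolding ode_solution_def by blast
        from chain_V[OF this Vd[OF ns]]
        have dv: "((\<lambda>s. V (y s)) has_real_derivative V' (y s) (f (y s))) (at s within {0..t})" .
        have de: "((\<lambda>s. exp (c3 * s)) has_real_derivative exp (c3 * s) * c3) (at s within {0..t})"
          by (auto intro!: derivative_eq_intros)
        have "((\<lambda>s. - (exp (c3 * s) * V (y s))) has_real_derivative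
               - (exp (c3 * s) * c3 * V (y s) + V' (y s) (f (y s)) * exp (c3 * s))) (at s within {0..t})"
          by (rule DERIV_minus[OF DERIV_mult[OF de dv]])
        then show "((\<lambda>s. - (exp (c3 * s) * V (y s))) has_real_derivative
               - (c3 * exp (c3 * s) * V (y s) + exp (c3 * s) * V' (y s) (f (y s)))) (at s within {0..t})"
          by (rule DERIV_cong) (simp add: algebra_simps)
        have "exp (c3 * s) * V' (y s) (f (y s)) \<le> exp (c3 * s) * (- c3 * V (y s))"
          using Vdec[OF ns] by (intro mult_left_mono) auto
        then show "0 \<le> - (c3 * exp (c3 * s) * V (y s) + exp (c3 * s) * V' (y s) (f (y s)))"
          by (simp add: algebra_simps)
      qed
      then have "exp (c3 * t) * V (y t) \<le> V (y 0)" by simp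
      then have "exp (- c3 * t) * (exp (c3 * t) * V (y t)) \<le> exp (- c3 * t) * V (y 0)"
        by (intro mult_left_mono) auto
      then show ?thesis by (simp add: mult.assoc[symmetric] exp_add[symmetric])
    qed
    have bound: "norm (y t) \<le> sqrt (exp (- c3 * t) * (V (y 0) / c1))" if t: "t \<ge> 0" for t
    proof -
      have "c1 * (norm (y t))^2 \<le> exp (- c3 * t) * V (y 0)"
      proof -
        have "c1 * (norm (y t))^2 \<le> V (y t)" using Vb[of "y t"] inb[OF t] by simp
        then show ?thesis using dec[OF t] by linarith
      qed
      then have "(norm (y t))^2 \<le> exp (- c3 * t) * (V (y 0) / c1)"
        using c1 by (simp add: field_simps)
      then show ?thesis by (simp add: real_le_rsqrt)
    qed
    show ?thesis
    proof (rule tendsto_norm_zero_cancel)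
      show "((\<lambda>t. norm (y t)) \<longlongrightarrow> 0) at_top"
      proof (rule Lim_null_comparison[OF _ exp_decay_tendsto[OF c3, of "V (y 0) / c1"]])
        show "\<forall>\<^sub>F t in at_top. norm (norm (y t)) \<le> sqrt (exp (- c3 * t) * (V (y 0) / c1))"
          using bound by (auto intro!: eventually_at_top_linorderI[of 0])
      qed
    qed
  qed
  show ?thesis unfolding loc_asym_stable_def
  proof (intro conjI exI[of _ \<eta>] allI impI ls \<eta>)
    fix y assume "(\<forall>T\<ge>0. ode_solution f y T) \<and> dist (y 0) 0 < \<eta>"
    then show "(y \<longlongrightarrow> 0) at_top" using att[of y] by simp
  qed
qed

lemma instab_generic:
  fixes f g :: "'a::real_normed_vector \<Rightarrow> 'a" and V :: "'a \<Rightarrow> real"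
  assumes f0: "f 0 = 0" and r: "r > 0" and c2: "c2 > 0" and c3: "c3 > 0"
    and Vb: "\<And>y. norm y \<le> r \<Longrightarrow> V y \<le> c2 * (norm y)^2"
    and Vd: "\<And>y. norm y \<le> r \<Longrightarrow> (V has_derivative V' y) (at y)"
    and Vinc: "\<And>y. norm y \<le> r \<Longrightarrow> V' y (f y) \<ge> c3 * (norm y)^2"
    and Vpos: "\<And>\<eta>. \<eta> > 0 \<Longrightarrow> \<exists>y0. norm y0 < \<eta> \<and> V y0 > 0"
    and gf: "\<And>y. norm y \<le> r \<Longrightarrow> g y = f y"
    and ex: "\<And>y0 T. T \<ge> 0 \<Longrightarrow> \<exists>y. y 0 = y0 \<and> (\<forall>t\<in>{0..T}. (y has_vector_derivative g (y t)) (at t within {0..T}))"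
  shows "eq_unstable f 0"
  unfolding eq_unstable_def
proof (intro conjI f0 notI)
  assume "lyap_stable f 0"
  then obtain \<eta> where \<eta>: "\<eta> > 0" and
    LS: "\<forall>y T. ode_solution f y T \<and> dist (y 0) 0 < \<eta> \<longrightarrow> (\<forall>t\<in>{0..T}. dist (y t) 0 < r)"
    unfolding lyap_stable_def using r by blast
  obtain y0 where y0: "norm y0 < min \<eta> r" "V y0 > 0" using Vpos[of "min \<eta> r"] \<eta> r by auto
  define V0 where "V0 = V y0"
  define \<kappa> where "\<kappa> = c3 * V0 / c2"
  have \<kappa>: "\<kappa> > 0" unfolding \<kappa>_def V0_def using c2 c3 y0 by simp
  define T where "T = c2 * r^2 / \<kappa> + 1"
  have "c2 * r^2 / \<kappa> \<ge> 0" using \<kappa> c2 by simp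
  then have T: "T > 0" unfolding T_def by linarith
  obtain y where y: "y 0 = y0" and yd: "\<forall>t\<in>{0..T}. (y has_vector_derivative g (y t)) (at t within {0..T})"
    using ex[of T y0] T by auto
  have ycont: "continuous_on {0..T} y"
    using yd by (intro continuous_on_vector_derivative) auto
  have fsol: "(y has_vector_derivative f (y s)) (at s within {0..t})"
    if "t \<in> {0..T}" "s \<in> {0..t}" "\<forall>u\<in>{0..t}. norm (y u) \<le> r" for t s
  proof -
    have "(y has_vector_derivative g (y s)) (at s within {0..T})" using yd that by auto
    then have "(y has_vector_derivative g (y s)) (at s within {0..t})"
      by (rule has_vector_derivative_within_subset) (use that in auto)
    moreover have "g (y s) = f (y s)" using gf that by auto
    ultimately show ?thesis by simp
  qed
  show False
  proof (cases "\<exists>t\<in>{0..T}. norm (y t) \<ge> r")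
    case True
    then obtain t0 where t0: "t0 \<in> {0..T}" "norm (y t0) \<ge> r" by auto
    have cn: "continuous_on {0..T} (\<lambda>s. norm (y s))" by (intro continuous_on_norm ycont)
    have "norm (y 0) < r" using y y0 by simp
    then obtain \<tau> where \<tau>: "\<tau> \<in> {0..T}" "norm (y \<tau>) = r" "\<forall>s\<in>{0..\<tau>}. norm (y s) \<le> r"
      using first_exit[OF cn _ t0] by blast
    have "ode_solution f y \<tau>" unfolding ode_solution_def
      using fsol[OF \<tau>(1) _ \<tau>(3)] by blast
    moreover have "dist (y 0) 0 < \<eta>" using y y0 by simp
    ultimately have "dist (y \<tau>) 0 < r" using LS[rule_format, of y \<tau> \<tau>] \<tau> by simp
    then show False using \<tau> by simp
  next
    case False
    then have inb: "\<forall>u\<in>{0..T}. norm (y u) \<le> r" by auto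
    have dV: "((\<lambda>s. V (y s)) has_real_derivative V' (y s) (f (y s))) (at s within {0..t})"
      if "t \<in> {0..T}" "s \<in> {0..t}" for t s
    proof -
      have "\<forall>u\<in>{0..t}. norm (y u) \<le> r" using inb that by auto
      from chain_V[OF fsol[OF that this] Vd] show ?thesis using inb that by auto
    qed
    have m1: "V (y t) \<ge> V0" if t: "t \<in> {0..T}" for t
    proof -
      have "V (y 0) \<le> V (y t)"
      proof (rule mono_deriv[where h = "\<lambda>s. V (y s)" and h' = "\<lambda>s. V' (y s) (f (y s))"])
        show "0 \<le> t" using t by simp
      next
        fix s assume s: "s \<in> {0..t}"
        show "((\<lambda>s. V (y s)) has_real_derivative V' (y s) (f (y s))) (at s within {0..t})"
          by (rule dV[OF t s])
        have "norm (y s) \<le> r" using inb s t by auto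
        then have "V' (y s) (f (y s)) \<ge> c3 * (norm (y s))^2" by (rule Vinc)
        moreover have "c3 * (norm (y s))^2 \<ge> 0" using c3 by simp
        ultimately show "0 \<le> V' (y s) (f (y s))" by linarith
      qed
      then show ?thesis using y unfolding V0_def by simp
    qed
    have "V (y 0) - \<kappa> * 0 \<le> V (y T) - \<kappa> * T"
    proof (rule mono_deriv[where h = "\<lambda>s. V (y s) - \<kappa> * s" and h' = "\<lambda>s. V' (y s) (f (y s)) - \<kappa>"])
      show "0 \<le> T" using T by simp
    next
      fix s assume s: "s \<in> {0..T}"
      have "((\<lambda>s. \<kappa> * s) has_real_derivative \<kappa>) (at s within {0..T})"
        by (auto intro!: derivative_eq_intros)
      then show "((\<lambda>s. V (y s) - \<kappa> * s) has_real_derivative V' (y s) (f (y s)) - \<kappa>) (at s within {0..T})"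
        by (intro DERIV_diff dV[of T s]) (use s T in auto)
      have ns: "norm (y s) \<le> r" using inb s by auto
      have "V0 \<le> c2 * (norm (y s))^2" using m1[OF s] Vb[OF ns] by linarith
      then have "c3 * V0 \<le> c3 * (c2 * (norm (y s))^2)" using c3 by (intro mult_left_mono) auto
      then have "\<kappa> \<le> c3 * (norm (y s))^2" unfolding \<kappa>_def using c2 by (simp add: field_simps)
      then show "0 \<le> V' (y s) (f (y s)) - \<kappa>" using Vinc[OF ns] by linarith
    qed
    then have A: "V (y T) \<ge> V0 + \<kappa> * T" using y unfolding V0_def by simp
    have "\<kappa> * T = c2 * r^2 + \<kappa>" unfolding T_def using \<kappa> by (simp add: field_simps)
    then have B: "V (y T) > c2 * r^2" using A y0 \<kappa> unfolding V0_def by linarith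
    have nT: "norm (y T) \<le> r" using inb T by auto
    have "c2 * (norm (y T))^2 \<le> c2 * r^2" using c2 nT by (intro mult_left_mono power_mono) auto
    then show False using Vb[OF nT] B by linarith
  qed
qed

lemma exp_integral_bound:
  fixes L d \<tau> :: real
  assumes L: "L > 0" and d: "d \<ge> 0" and \<tau>: "\<tau> \<ge> 0"
  shows "integral {0..\<tau>} (\<lambda>s. L * exp (2 * L * s) * d) = d * (exp (2 * L * \<tau>) - 1) / 2"
proof -
  have "((\<lambda>s. L * exp (2 * L * s) * d) has_integral
         ((\<lambda>s. d * exp (2 * L * s) / 2) \<tau> - (\<lambda>s. d * exp (2 * L * s) / 2) 0)) {0..\<tau>}"
  proof (rule fundamental_theorem_of_calculus[OF \<tau>])
    fix x assume "x \<in> {0..\<tau>}"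
    have "((\<lambda>s. d * exp (2 * L * s) / 2) has_real_derivative (d * (exp (2 * L * x) * (2 * L)) / 2)) (at x within {0..\<tau>})"
      by (auto intro!: derivative_eq_intros)
    then show "((\<lambda>s. d * exp (2 * L * s) / 2) has_vector_derivative L * exp (2 * L * x) * d) (at x within {0..\<tau>})"
      unfolding has_real_derivative_iff_has_vector_derivative[symmetric]
      by (rule DERIV_cong) (simp add: algebra_simps)
  qed
  then have "integral {0..\<tau>} (\<lambda>s. L * exp (2 * L * s) * d) = d * exp (2 * L * \<tau>) / 2 - d * exp (2 * L * 0) / 2"
    by (rule integral_unique)
  then show ?thesis by (simp add: algebra_simps diff_divide_distrib)
qed

lemma picard:
  fixes g :: "'a::euclidean_space \<Rightarrow> 'a"
  assumes lip: "\<And>u v. dist (g u) (g v) \<le> L * dist u v" and L: "L > 0" and T: "T \<ge> 0"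
  shows "\<exists>y. y 0 = y0 \<and> (\<forall>t\<in>{0..T}. (y has_vector_derivative g (y t)) (at t within {0..T}))"
proof -
  have gc: "continuous_on UNIV g"
    by (rule lipschitz_on_continuous_on[of L]) (use lip L in \<open>auto simp: lipschitz_on_def\<close>)
  define c where "c t = max 0 (min T t)" for t :: real
  have c_in: "c t \<in> {0..T}" for t unfolding c_def using T by auto
  have c_id: "t \<in> {0..T} \<Longrightarrow> c t = t" for t unfolding c_def by auto
  have cc: "continuous_on UNIV c" unfolding c_def by (intro continuous_intros)
  define G where "G v s = g (exp (2 * L * s) *\<^sub>R apply_bcontfun v s)" for v :: "real \<Rightarrow>\<^sub>C 'a" and s
  have Gc: "continuous_on S (G v)" for v S
    unfolding G_def
    by (rule continuous_on_compose2[OF gc _ subset_UNIV]) (intro continuous_intros continuous_on_apply_bcontfun)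
  define P where "P v \<tau> = exp (- (2 * L * \<tau>)) *\<^sub>R (y0 + integral {0..\<tau>} (G v))" for v \<tau>
  have Pc: "continuous_on {0..T} (P v)" for v
  proof -
    have "continuous_on {0..T} (\<lambda>\<tau>. integral {0..\<tau>} (G v))"
      by (rule continuous_on_vector_derivative[OF integral_has_vector_derivative[OF Gc]])
    then show ?thesis unfolding P_def by (intro continuous_intros)
  qed
  have Pin: "(\<lambda>t. P v (c t)) \<in> bcontfun" for v
  proof -
    have "continuous_on UNIV (\<lambda>t. P v (c t))"
      by (rule continuous_on_compose2[OF Pc[of v] cc]) (use c_in in auto)
    moreover have "bounded (range (\<lambda>t. P v (c t)))"
    proof (rule bounded_subset)
      show "bounded (P v ` {0..T})"
        by (intro compact_imp_bounded compact_continuous_image Pc) simp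
      show "range (\<lambda>t. P v (c t)) \<subseteq> P v ` {0..T}" using c_in by auto
    qed
    ultimately show ?thesis unfolding bcontfun_def by simp
  qed
  define \<Phi> where "\<Phi> v = Bcontfun (\<lambda>t. P v (c t))" for v
  have \<Phi>app: "apply_bcontfun (\<Phi> v) t = P v (c t)" for v t
    unfolding \<Phi>_def using Pin[of v] by (simp add: Bcontfun_inverse)
  have contr: "dist (\<Phi> v1) (\<Phi> v2) \<le> 1/2 * dist v1 v2" for v1 v2
  proof (rule dist_bound)
    fix t
    define \<tau> where "\<tau> = c t"
    have \<tau>: "\<tau> \<in> {0..T}" unfolding \<tau>_def by (rule c_in)
    define d where "d = dist v1 v2"
    have d0: "d \<ge> 0" unfolding d_def by simp
    have i1: "G v integrable_on {0..\<tau>}" for v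
      by (rule integrable_continuous_real[OF Gc])
    have pw: "norm (G v1 s - G v2 s) \<le> L * exp (2 * L * s) * d" for s
    proof -
      have "norm (G v1 s - G v2 s) = dist (G v1 s) (G v2 s)" by (simp add: dist_norm)
      also have "\<dots> \<le> L * dist (exp (2 * L * s) *\<^sub>R apply_bcontfun v1 s) (exp (2 * L * s) *\<^sub>R apply_bcontfun v2 s)"
        unfolding G_def by (rule lip)
      also have "dist (exp (2 * L * s) *\<^sub>R apply_bcontfun v1 s) (exp (2 * L * s) *\<^sub>R apply_bcontfun v2 s)
          = exp (2 * L * s) * dist (apply_bcontfun v1 s) (apply_bcontfun v2 s)"
        by (simp add: dist_norm scaleR_diff_right[symmetric])
      also have "\<dots> \<le> exp (2 * L * s) * d" unfolding d_def
        by (intro mult_left_mono dist_bounded) simp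
      finally show ?thesis using L by (simp add: mult_left_mono mult.assoc)
    qed
    have "norm (integral {0..\<tau>} (G v1) - integral {0..\<tau>} (G v2))
        = norm (integral {0..\<tau>} (\<lambda>s. G v1 s - G v2 s))"
      by (simp add: integral_diff[OF i1 i1])
    also have "\<dots> \<le> integral {0..\<tau>} (\<lambda>s. L * exp (2 * L * s) * d)"
      by (rule integral_norm_bound_integral)
        (auto intro!: integrable_diff i1 integrable_continuous_real continuous_intros pw Gc)
    also have "\<dots> = d * (exp (2 * L * \<tau>) - 1) / 2"
      using exp_integral_bound[OF L d0, of \<tau>] \<tau> by simp
    finally have nb: "norm (integral {0..\<tau>} (G v1) - integral {0..\<tau>} (G v2)) \<le> d * (exp (2 * L * \<tau>) - 1) / 2" .
    have "dist (apply_bcontfun (\<Phi> v1) t) (apply_bcontfun (\<Phi> v2) t)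
        = exp (- (2 * L * \<tau>)) * norm (integral {0..\<tau>} (G v1) - integral {0..\<tau>} (G v2))"
      unfolding \<Phi>app P_def \<tau>_def[symmetric] dist_norm
      by (simp add: scaleR_diff_right[symmetric])
    also have "\<dots> \<le> exp (- (2 * L * \<tau>)) * (d * (exp (2 * L * \<tau>) - 1) / 2)"
      by (intro mult_left_mono nb) simp
    also have "\<dots> = d * (1 - exp (- (2 * L * \<tau>))) / 2"
      by (simp add: algebra_simps exp_minus field_simps)
    also have "\<dots> \<le> 1/2 * d" using d0 by (simp add: mult_left_le)
    finally show "dist (apply_bcontfun (\<Phi> v1) t) (apply_bcontfun (\<Phi> v2) t) \<le> 1/2 * dist v1 v2"
      unfolding d_def .
  qed
  obtain v where v: "\<Phi> v = v"
    using Banach_fix[OF complete_UNIV UNIV_not_empty, of "1/2" \<Phi>] contr by auto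
  define Y where "Y t = y0 + integral {0..t} (G v)" for t
  have Yv: "Y t = exp (2 * L * t) *\<^sub>R apply_bcontfun v t" if t: "t \<in> {0..T}" for t
  proof -
    have "apply_bcontfun v t = apply_bcontfun (\<Phi> v) t" using v by simp
    also have "\<dots> = exp (- (2 * L * t)) *\<^sub>R Y t" unfolding \<Phi>app P_def Y_def c_id[OF t] ..
    finally show ?thesis by (simp add: exp_minus)
  qed
  show ?thesis
  proof (intro exI[of _ Y] conjI ballI)
    show "Y 0 = y0" unfolding Y_def by simp
  next
    fix t assume t: "t \<in> {0..T}"
    have "((\<lambda>t. y0 + integral {0..t} (G v)) has_vector_derivative (0 + G v t)) (at t within {0..T})"
      by (intro derivative_intros integral_has_vector_derivative Gc t)
    moreover have "G v t = g (Y t)" unfolding G_def Yv[OF t] ..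
    ultimately show "(Y has_vector_derivative g (Y t)) (at t within {0..T})"
      unfolding Y_def by simp
  qed
qed

definition lipb :: "'a::metric_space set \<Rightarrow> ('a \<Rightarrow> real) \<Rightarrow> bool" where
  "lipb U h \<longleftrightarrow> (\<exists>L. L-lipschitz_on U h) \<and> (\<exists>M. \<forall>y\<in>U. \<bar>h y\<bar> \<le> M)"

lemma nfst: "norm (fst p) \<le> norm p"
  using norm_fst_le[of "fst p" "snd p"] by simp

lemma nsnd: "norm (snd p) \<le> norm p"
  using norm_snd_le[where x="fst p" and y="snd p"] by simp

lemma lipb_const: "lipb U (\<lambda>y. c)"
  unfolding lipb_def
proof (intro conjI exI ballI)
  show "0-lipschitz_on U (\<lambda>y. c)" by (rule lipschitz_on_constant)
  fix y show "\<bar>c\<bar> \<le> \<bar>c\<bar>" by simp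
qed

lemma lipb_add: "lipb U f \<Longrightarrow> lipb U g \<Longrightarrow> lipb U (\<lambda>y. f y + g y)"
  unfolding lipb_def
proof (elim conjE exE, intro conjI)
  fix L1 L2 M1 M2 assume l1: "L1-lipschitz_on U f" and l2: "L2-lipschitz_on U g" and
    "\<forall>y\<in>U. \<bar>f y\<bar> \<le> M1" "\<forall>y\<in>U. \<bar>g y\<bar> \<le> M2"
  show "\<exists>L. L-lipschitz_on U (\<lambda>y. f y + g y)"
    using lipschitz_on_add[OF l1 l2] by blast
  show "\<exists>M. \<forall>y\<in>U. \<bar>f y + g y\<bar> \<le> M"
  proof (intro exI[of _ "M1 + M2"] ballI)
    fix y assume "y \<in> U"
    then have "\<bar>f y\<bar> \<le> M1" "\<bar>g y\<bar> \<le> M2" using \<open>\<forall>y\<in>U. \<bar>f y\<bar> \<le> M1\<close> \<open>\<forall>y\<in>U. \<bar>g y\<bar> \<le> M2\<close> by auto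
    then show "\<bar>f y + g y\<bar> \<le> M1 + M2" by linarith
  qed
qed

lemma lipb_minus: "lipb U f \<Longrightarrow> lipb U (\<lambda>y. - f y)"
  unfolding lipb_def by (auto intro!: lipschitz_on_minus)

lemma lipb_diff: "lipb U f \<Longrightarrow> lipb U g \<Longrightarrow> lipb U (\<lambda>y. f y - g y)"
  using lipb_add[of U f "\<lambda>y. - g y"] lipb_minus[of U g] by simp

lemma lipb_mult: "lipb U f \<Longrightarrow> lipb U g \<Longrightarrow> lipb U (\<lambda>y. f y * g y)"
  unfolding lipb_def
proof (elim conjE exE, intro conjI)
  fix L1 L2 M1 M2 assume l1: "L1-lipschitz_on U f" and l2: "L2-lipschitz_on U g"
    and m1: "\<forall>y\<in>U. \<bar>f y\<bar> \<le> M1" and m2: "\<forall>y\<in>U. \<bar>g y\<bar> \<le> M2"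
  show "\<exists>M. \<forall>y\<in>U. \<bar>f y * g y\<bar> \<le> M"
    using m1 m2 by (auto intro!: exI[of _ "M1 * M2"] simp: abs_mult intro!: mult_mono)
  show "\<exists>L. L-lipschitz_on U (\<lambda>y. f y * g y)"
  proof (intro exI[of _ "\<bar>M1\<bar> * L2 + \<bar>M2\<bar> * L1"] lipschitz_onI)
    fix a b assume a: "a \<in> U" and b: "b \<in> U"
    have M1: "M1 \<ge> 0" "\<bar>f a\<bar> \<le> M1" using m1 a by force+
    have M2: "\<bar>g b\<bar> \<le> M2" using m2 b by force
    have "dist (f a * g a) (f b * g b) = \<bar>f a * (g a - g b) + g b * (f a - f b)\<bar>"
      by (simp add: dist_real_def algebra_simps)
    also have "\<dots> \<le> \<bar>f a\<bar> * \<bar>g a - g b\<bar> + \<bar>g b\<bar> * \<bar>f a - f b\<bar>"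
      by (rule abs_triangle_ineq[THEN order_trans]) (simp add: abs_mult)
    also have "\<dots> \<le> M1 * (L2 * dist a b) + M2 * (L1 * dist a b)"
    proof -
      have g1: "\<bar>g a - g b\<bar> \<le> L2 * dist a b" using lipschitz_onD[OF l2 a b] by (simp add: dist_real_def)
      have f1: "\<bar>f a - f b\<bar> \<le> L1 * dist a b" using lipschitz_onD[OF l1 a b] by (simp add: dist_real_def)
      have "\<bar>f a\<bar> * \<bar>g a - g b\<bar> \<le> M1 * (L2 * dist a b)"
        by (rule mult_mono[OF M1(2) g1]) (use M1 in auto)
      moreover have "\<bar>g b\<bar> * \<bar>f a - f b\<bar> \<le> M2 * (L1 * dist a b)"
        by (rule mult_mono[OF M2 f1]) (use M2 in auto)
      ultimately show ?thesis by linarith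
    qed
    also have "\<dots> = (M1 * L2 + M2 * L1) * dist a b" by (simp add: algebra_simps)
    also have "\<dots> \<le> (\<bar>M1\<bar> * L2 + \<bar>M2\<bar> * L1) * dist a b"
    proof (rule mult_right_mono)
      have "M1 * L2 \<le> \<bar>M1\<bar> * L2" using lipschitz_on_nonneg[OF l2] by (intro mult_right_mono) auto
      moreover have "M2 * L1 \<le> \<bar>M2\<bar> * L1" using lipschitz_on_nonneg[OF l1] by (intro mult_right_mono) auto
      ultimately show "M1 * L2 + M2 * L1 \<le> \<bar>M1\<bar> * L2 + \<bar>M2\<bar> * L1" by linarith
    qed simp
    finally show "dist (f a * g a) (f b * g b) \<le> (\<bar>M1\<bar> * L2 + \<bar>M2\<bar> * L1) * dist a b" .
  next
    show "0 \<le> \<bar>M1\<bar> * L2 + \<bar>M2\<bar> * L1"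
      using lipschitz_on_nonneg[OF l1] lipschitz_on_nonneg[OF l2] by simp
  qed
qed

lemma lipb_inv:
  assumes "lipb U h" "m > 0" "\<And>y. y \<in> U \<Longrightarrow> h y \<ge> m"
  shows "lipb U (\<lambda>y. 1 / h y)"
  using assms(1) unfolding lipb_def
proof (elim conjE exE, intro conjI)
  fix L M assume l: "L-lipschitz_on U h"
  show "\<exists>M. \<forall>y\<in>U. \<bar>1 / h y\<bar> \<le> M"
  proof (intro exI ballI)
    fix y assume "y \<in> U"
    then have "h y \<ge> m" by (rule assms(3))
    then show "\<bar>1 / h y\<bar> \<le> 1 / m" using assms(2) by (simp add: frac_le)
  qed
  show "\<exists>L. L-lipschitz_on U (\<lambda>y. 1 / h y)"
  proof (intro exI[of _ "L / (m * m)"] lipschitz_onI)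
    fix a b assume a: "a \<in> U" and b: "b \<in> U"
    have ha: "h a \<ge> m" and hb: "h b \<ge> m" using assms(3) a b by auto
    have "dist (1 / h a) (1 / h b) = \<bar>h b - h a\<bar> / (h a * h b)"
      using ha hb assms(2) by (simp add: dist_real_def field_simps abs_div)
    also have "\<dots> \<le> \<bar>h b - h a\<bar> / (m * m)"
      using ha hb assms(2) by (intro divide_left_mono mult_mono) auto
    also have "\<dots> \<le> (L * dist a b) / (m * m)"
      using lipschitz_onD[OF l a b] assms(2) by (intro divide_right_mono) (auto simp: dist_real_def abs_minus_commute)
    finally show "dist (1 / h a) (1 / h b) \<le> (L / (m * m)) * dist a b" by simp
  next
    show "0 \<le> L / (m * m)" using lipschitz_on_nonneg[OF l] by simp
  qed
qed

lemma lipb_divide: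
  assumes "lipb U f" "lipb U h" "m > 0" "\<And>y. y \<in> U \<Longrightarrow> h y \<ge> m"
  shows "lipb U (\<lambda>y. f y / h y)"
  using lipb_mult[OF assms(1) lipb_inv[OF assms(2-4)]] by simp

lemma lipb_power2: "lipb U f \<Longrightarrow> lipb U (\<lambda>y. (f y)^2)"
  using lipb_mult[of U f f] by (simp add: power2_eq_square)

lemma lipb_fst: "lipb (cball 0 r) (\<lambda>y::real \<times> 'b::real_normed_vector. fst y)"
  unfolding lipb_def
proof (intro conjI exI ballI lipschitz_onI)
  fix a b :: "real \<times> 'b" show "dist (fst a) (fst b) \<le> 1 * dist a b" by (simp add: dist_fst_le)
next
  fix y :: "real \<times> 'b" assume "y \<in> cball 0 r"
  then show "\<bar>fst y\<bar> \<le> r" using nfst[of y] by (auto simp: dist_norm)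
qed simp

lemma lipb_x: "lipb (cball 0 r) (\<lambda>y::real \<times> real \<times> real. fst (snd y))"
  unfolding lipb_def
proof (intro conjI exI ballI lipschitz_onI)
  fix a b :: "real \<times> real \<times> real"
  have "dist (fst (snd a)) (fst (snd b)) \<le> dist (snd a) (snd b)" by (rule dist_fst_le)
  also have "\<dots> \<le> dist a b" by (rule dist_snd_le)
  finally show "dist (fst (snd a)) (fst (snd b)) \<le> 1 * dist a b" by simp
next
  fix y :: "real \<times> real \<times> real" assume "y \<in> cball 0 r"
  then have "norm y \<le> r" by (auto simp: dist_norm)
  moreover have "\<bar>fst (snd y)\<bar> \<le> norm (snd y)" using nfst[of "snd y"] by simp
  moreover have "norm (snd y) \<le> norm y" by (rule nsnd)
  ultimately show "\<bar>fst (snd y)\<bar> \<le> r" by linarith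
qed simp

lemma lipb_z: "lipb (cball 0 r) (\<lambda>y::real \<times> real \<times> real. snd (snd y))"
  unfolding lipb_def
proof (intro conjI exI ballI lipschitz_onI)
  fix a b :: "real \<times> real \<times> real"
  have "dist (snd (snd a)) (snd (snd b)) \<le> dist (snd a) (snd b)" by (rule dist_snd_le)
  also have "\<dots> \<le> dist a b" by (rule dist_snd_le)
  finally show "dist (snd (snd a)) (snd (snd b)) \<le> 1 * dist a b" by simp
next
  fix y :: "real \<times> real \<times> real" assume "y \<in> cball 0 r"
  then have "norm y \<le> r" by (auto simp: dist_norm)
  moreover have "\<bar>snd (snd y)\<bar> \<le> norm (snd y)" using nsnd[of "snd y"] by simp
  moreover have "norm (snd y) \<le> norm y" by (rule nsnd)
  ultimately show "\<bar>snd (snd y)\<bar> \<le> r" by linarith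
qed simp

lemma comp_bounds:
  fixes y :: "real \<times> real \<times> real"
  assumes "norm y \<le> r"
  shows "\<bar>fst y\<bar> \<le> r" "\<bar>fst (snd y)\<bar> \<le> r" "\<bar>snd (snd y)\<bar> \<le> r"
proof -
  have "\<bar>fst y\<bar> \<le> norm y" using nfst[of y] by simp
  then show "\<bar>fst y\<bar> \<le> r" using assms by linarith
  have "\<bar>fst (snd y)\<bar> \<le> norm (snd y)" using nfst[of "snd y"] by simp
  moreover have "norm (snd y) \<le> norm y" by (rule nsnd)
  ultimately show "\<bar>fst (snd y)\<bar> \<le> r" using assms by linarith
  have "\<bar>snd (snd y)\<bar> \<le> norm (snd y)" using nsnd[of "snd y"] by simp
  moreover have "norm (snd y) \<le> norm y" by (rule nsnd)
  ultimately show "\<bar>snd (snd y)\<bar> \<le> r" using assms by linarith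
qed

lemma field_lip:
  assumes r: "r \<le> 1/4"
  shows "\<exists>L. L-lipschitz_on (cball 0 r) (scpw_field k1 \<alpha> \<beta> \<delta>)"
proof -
  let ?U = "cball (0::real \<times> real \<times> real) r"
  define w where "w y = fst y" for y :: "real \<times> real \<times> real"
  define x where "x y = fst (snd y)" for y :: "real \<times> real \<times> real"
  define z where "z y = snd (snd y)" for y :: "real \<times> real \<times> real"
  have lw: "lipb ?U w" unfolding w_def by (rule lipb_fst)
  have lx: "lipb ?U x" unfolding x_def by (rule lipb_x)
  have lz: "lipb ?U z" unfolding z_def by (rule lipb_z)
  have D1: "1 - x y - z y \<ge> 1/2" if "y \<in> ?U" for y
  proof -
    have "norm y \<le> r" using that by (auto simp: dist_norm)
    from comp_bounds[OF this] show ?thesis unfolding x_def z_def using r by linarith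
  qed
  have D2: "(1 - x y - z y)^2 \<ge> 1/4" if "y \<in> ?U" for y
  proof -
    have "(1/2::real)^2 \<le> (1 - x y - z y)^2" using D1[OF that] by (intro power_mono) auto
    then show ?thesis by (simp add: power2_eq_square)
  qed
  have lD: "lipb ?U (\<lambda>y. 1 - x y - z y)" by (intro lipb_diff lipb_const lx lz)
  have l1: "lipb ?U (\<lambda>y. k1 * \<delta> * x y - w y)" by (intro lipb_diff lipb_mult lipb_const lx lw)
  have l2: "lipb ?U (\<lambda>y. z y - (\<delta> + 1) * x y + (\<alpha> * \<delta> / k1) * ((1 - w y) * x y * (1 - 3 * x y - z y) / (1 - x y - z y)^2)
        + \<beta> * \<delta> * (x y * (1 - 3 * x y - z y) / (1 - x y - z y)))"
    by (intro lipb_add lipb_diff lipb_mult lipb_const lx lz lw lipb_divide[OF _ _ _ D2] lipb_divide[OF _ _ _ D1]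
        lipb_power2 lD) auto
  have l3: "lipb ?U (\<lambda>y. - 2 * z y + 2 * \<delta> * x y + (2 * \<alpha> * \<delta> / k1) * ((1 - w y) * (x y)^2 / (1 - x y - z y)^2)
        + 2 * \<beta> * \<delta> * ((x y)^2 / (1 - x y - z y)))"
    by (intro lipb_add lipb_diff lipb_mult lipb_const lx lz lw lipb_divide[OF _ _ _ D2] lipb_divide[OF _ _ _ D1]
        lipb_power2 lD lipb_minus) auto
  obtain L1 where L1: "L1-lipschitz_on ?U (\<lambda>y. k1 * \<delta> * x y - w y)" using l1 unfolding lipb_def by blast
  obtain L2 where L2: "L2-lipschitz_on ?U (\<lambda>y. z y - (\<delta> + 1) * x y + (\<alpha> * \<delta> / k1) * ((1 - w y) * x y * (1 - 3 * x y - z y) / (1 - x y - z y)^2)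
        + \<beta> * \<delta> * (x y * (1 - 3 * x y - z y) / (1 - x y - z y)))" using l2 unfolding lipb_def by blast
  obtain L3 where L3: "L3-lipschitz_on ?U (\<lambda>y. - 2 * z y + 2 * \<delta> * x y + (2 * \<alpha> * \<delta> / k1) * ((1 - w y) * (x y)^2 / (1 - x y - z y)^2)
        + 2 * \<beta> * \<delta> * ((x y)^2 / (1 - x y - z y)))" using l3 unfolding lipb_def by blast
  have eq: "scpw_field k1 \<alpha> \<beta> \<delta> y = (k1 * \<delta> * x y - w y,
      z y - (\<delta> + 1) * x y + (\<alpha> * \<delta> / k1) * ((1 - w y) * x y * (1 - 3 * x y - z y) / (1 - x y - z y)^2)
        + \<beta> * \<delta> * (x y * (1 - 3 * x y - z y) / (1 - x y - z y)),
      - 2 * z y + 2 * \<delta> * x y + (2 * \<alpha> * \<delta> / k1) * ((1 - w y) * (x y)^2 / (1 - x y - z y)^2)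
        + 2 * \<beta> * \<delta> * ((x y)^2 / (1 - x y - z y)))" for y
    unfolding w_def x_def z_def scpw_field_def by (cases y) auto
  have eqf: "scpw_field k1 \<alpha> \<beta> \<delta> = (\<lambda>y. (k1 * \<delta> * x y - w y,
      z y - (\<delta> + 1) * x y + (\<alpha> * \<delta> / k1) * ((1 - w y) * x y * (1 - 3 * x y - z y) / (1 - x y - z y)^2)
        + \<beta> * \<delta> * (x y * (1 - 3 * x y - z y) / (1 - x y - z y)),
      - 2 * z y + 2 * \<delta> * x y + (2 * \<alpha> * \<delta> / k1) * ((1 - w y) * (x y)^2 / (1 - x y - z y)^2)
        + 2 * \<beta> * \<delta> * ((x y)^2 / (1 - x y - z y))))"
    by (rule ext) (rule eq)
  show ?thesis
    unfolding eqf using lipschitz_on_Pair[OF L1 lipschitz_on_Pair[OF L2 L3]] by blast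
qed

lemma norm3_sq: "(norm (w::real, x::real, z::real))^2 = w^2 + x^2 + z^2"
  by (simp add: norm_Pair)

lemma decomp_D:
  fixes w x z \<kappa> B \<delta> D :: real
  assumes D: "D \<noteq> 0"
  shows "z - (\<delta> + 1) * x + \<kappa> * ((1 - w) * x * (D - 2*x) / D^2) + B * (x * (D - 2*x) / D)
       = (-(\<delta>+1) + \<kappa> + B) * x + z + (\<kappa> * x * (D * (1 - D) - 2 * x - w * (D - 2 * x)) / D^2 - 2 * B * x^2 / D)"
    and "- 2 * z + 2 * \<delta> * x + (2 * \<kappa>) * ((1 - w) * x^2 / D^2) + 2 * B * (x^2 / D)
       = 2 * \<delta> * x - 2 * z + (2 * \<kappa> * (1 - w) * x^2 / D^2 + 2 * B * x^2 / D)"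
  using D by (simp_all add: field_simps power2_eq_square) (simp_all add: algebra_simps)?

lemma decomp:
  fixes w x z :: real
  defines "D \<equiv> 1 - x - z"
  assumes D: "D \<noteq> 0"
  shows "scpw_field k1 \<alpha> \<beta> \<delta> (w, x, z) =
    (k1 * \<delta> * x - w,
     (-(\<delta>+1) + \<alpha> * \<delta> / k1 + \<beta> * \<delta>) * x + z +
       ((\<alpha> * \<delta> / k1) * x * (D * (x + z) - 2 * x - w * (D - 2 * x)) / D^2 - 2 * (\<beta> * \<delta>) * x^2 / D),
     2 * \<delta> * x - 2 * z + (2 * (\<alpha> * \<delta> / k1) * (1 - w) * x^2 / D^2 + 2 * (\<beta> * \<delta>) * x^2 / D))"
proof -
  have e: "2 * \<alpha> * \<delta> / k1 = 2 * (\<alpha> * \<delta> / k1)" "2 * \<beta> * \<delta> = 2 * (\<beta> * \<delta>)" by simp_all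
  have e2: "1 - 3 * x - z = D - 2 * x" "x + z = 1 - D" "1 - x - z = D" unfolding D_def by simp_all
  show ?thesis unfolding scpw_field_def prod.case e e2
    using decomp_D[OF D, where z=z and \<delta>=\<delta> and \<kappa>="\<alpha> * \<delta> / k1" and w=w and x=x and B="\<beta> * \<delta>"]
    by (simp add: mult.assoc)
qed

lemma absprod: "\<bar>u\<bar> \<le> A \<Longrightarrow> \<bar>v\<bar> \<le> B \<Longrightarrow> \<bar>u * v\<bar> \<le> A * B" for u v A B :: real
  by (simp add: abs_mult mult_mono')

lemma R_bounds:
  fixes w x z \<kappa> B r :: real
  defines "D \<equiv> 1 - x - z"
  assumes r: "r \<le> 1/4" and w: "\<bar>w\<bar> \<le> r" and x: "\<bar>x\<bar> \<le> r" and z: "\<bar>z\<bar> \<le> r"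
  shows "\<bar>\<kappa> * x * (D * (x + z) - 2 * x - w * (D - 2 * x)) / D^2 - 2 * B * x^2 / D\<bar>
           \<le> (28 * \<bar>\<kappa>\<bar> + 4 * \<bar>B\<bar>) * r * \<bar>x\<bar>"
    and "\<bar>2 * \<kappa> * (1 - w) * x^2 / D^2 + 2 * B * x^2 / D\<bar> \<le> (28 * \<bar>\<kappa>\<bar> + 4 * \<bar>B\<bar>) * r * \<bar>x\<bar>"
proof -
  define N where "N = D * (x + z) - 2 * x - w * (D - 2 * x)"
  have r0: "r \<ge> 0" using w by linarith
  have D1: "D \<ge> 1/2" "D \<le> 3/2" unfolding D_def using x z r by linarith+
  have iD: "\<bar>1 / D\<bar> \<le> 2" using D1 by (simp add: field_simps)
  have iD2: "\<bar>1 / D^2\<bar> \<le> 4"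
  proof -
    have "(1/2::real)^2 \<le> D^2" using D1 by (intro power_mono) auto
    then show ?thesis using D1 by (simp add: field_simps power2_eq_square)
  qed
  have aD: "\<bar>D\<bar> \<le> 3/2" using D1 by simp
  have N: "\<bar>N\<bar> \<le> 7 * r"
  proof -
    have "\<bar>D * (x + z)\<bar> \<le> 3/2 * (2 * r)" by (rule absprod[OF aD]) (use x z in linarith)
    moreover have "\<bar>w * (D - 2 * x)\<bar> \<le> r * 2" by (rule absprod[OF w]) (use D1 x r in linarith)
    ultimately show ?thesis unfolding N_def using x by linarith
  qed
  have xx: "\<bar>x^2\<bar> \<le> \<bar>x\<bar> * r"
  proof -
    have "\<bar>x^2\<bar> = \<bar>x\<bar> * \<bar>x\<bar>" by (simp add: power2_eq_square abs_mult)
    also have "\<dots> \<le> \<bar>x\<bar> * r" using x by (intro mult_left_mono) auto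
    finally show ?thesis .
  qed
  have t1: "\<bar>\<kappa> * x * N / D^2\<bar> \<le> 28 * \<bar>\<kappa>\<bar> * r * \<bar>x\<bar>"
  proof -
    have a1: "\<bar>\<kappa> * x\<bar> \<le> \<bar>\<kappa>\<bar> * \<bar>x\<bar>" by (simp add: abs_mult)
    have a2: "\<bar>(\<kappa> * x) * N\<bar> \<le> (\<bar>\<kappa>\<bar> * \<bar>x\<bar>) * (7 * r)" by (rule absprod[OF a1 N])
    have a3: "\<bar>((\<kappa> * x) * N) * (1 / D^2)\<bar> \<le> ((\<bar>\<kappa>\<bar> * \<bar>x\<bar>) * (7 * r)) * 4" by (rule absprod[OF a2 iD2])
    have "\<kappa> * x * N / D^2 = ((\<kappa> * x) * N) * (1 / D^2)" by simp
    moreover have "((\<bar>\<kappa>\<bar> * \<bar>x\<bar>) * (7 * r)) * 4 = 28 * \<bar>\<kappa>\<bar> * r * \<bar>x\<bar>" by simp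
    ultimately show ?thesis using a3 by metis
  qed
  have t2: "\<bar>2 * B * x^2 / D\<bar> \<le> 4 * \<bar>B\<bar> * r * \<bar>x\<bar>"
  proof -
    have a1: "\<bar>2 * B\<bar> \<le> 2 * \<bar>B\<bar>" by (simp add: abs_mult)
    have a2: "\<bar>(2 * B) * x^2\<bar> \<le> (2 * \<bar>B\<bar>) * (\<bar>x\<bar> * r)" by (rule absprod[OF a1 xx])
    have a3: "\<bar>((2 * B) * x^2) * (1 / D)\<bar> \<le> ((2 * \<bar>B\<bar>) * (\<bar>x\<bar> * r)) * 2" by (rule absprod[OF a2 iD])
    have "2 * B * x^2 / D = ((2 * B) * x^2) * (1 / D)" by simp
    moreover have "((2 * \<bar>B\<bar>) * (\<bar>x\<bar> * r)) * 2 = 4 * \<bar>B\<bar> * r * \<bar>x\<bar>" by simp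
    ultimately show ?thesis using a3 by metis
  qed
  have t3: "\<bar>2 * \<kappa> * (1 - w) * x^2 / D^2\<bar> \<le> 28 * \<bar>\<kappa>\<bar> * r * \<bar>x\<bar>"
  proof -
    have w1: "\<bar>1 - w\<bar> \<le> 5/4" using w r by linarith
    have a0: "\<bar>2 * \<kappa>\<bar> \<le> 2 * \<bar>\<kappa>\<bar>" by (simp add: abs_mult)
    have a1: "\<bar>(2 * \<kappa>) * (1 - w)\<bar> \<le> (2 * \<bar>\<kappa>\<bar>) * (5/4)" by (rule absprod[OF a0 w1])
    have a2: "\<bar>((2 * \<kappa>) * (1 - w)) * x^2\<bar> \<le> ((2 * \<bar>\<kappa>\<bar>) * (5/4)) * (\<bar>x\<bar> * r)" by (rule absprod[OF a1 xx])
    have a3: "\<bar>(((2 * \<kappa>) * (1 - w)) * x^2) * (1 / D^2)\<bar> \<le> (((2 * \<bar>\<kappa>\<bar>) * (5/4)) * (\<bar>x\<bar> * r)) * 4"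
      by (rule absprod[OF a2 iD2])
    have "2 * \<kappa> * (1 - w) * x^2 / D^2 = (((2 * \<kappa>) * (1 - w)) * x^2) * (1 / D^2)" by simp
    moreover have "(((2 * \<bar>\<kappa>\<bar>) * (5/4)) * (\<bar>x\<bar> * r)) * 4 = 10 * (\<bar>\<kappa>\<bar> * r * \<bar>x\<bar>)" by simp
    ultimately have "\<bar>2 * \<kappa> * (1 - w) * x^2 / D^2\<bar> \<le> 10 * (\<bar>\<kappa>\<bar> * r * \<bar>x\<bar>)" using a3 by metis
    moreover have "0 \<le> \<bar>\<kappa>\<bar> * r * \<bar>x\<bar>" using r0 by simp
    moreover have "28 * \<bar>\<kappa>\<bar> * r * \<bar>x\<bar> = 28 * (\<bar>\<kappa>\<bar> * r * \<bar>x\<bar>)" by simp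
    ultimately show ?thesis by linarith
  qed
  have s: "(28 * \<bar>\<kappa>\<bar> + 4 * \<bar>B\<bar>) * r * \<bar>x\<bar> = 28 * \<bar>\<kappa>\<bar> * r * \<bar>x\<bar> + 4 * \<bar>B\<bar> * r * \<bar>x\<bar>"
    by (simp add: algebra_simps)
  have "\<bar>\<kappa> * x * N / D^2 - 2 * B * x^2 / D\<bar> \<le> (28 * \<bar>\<kappa>\<bar> + 4 * \<bar>B\<bar>) * r * \<bar>x\<bar>"
    unfolding s using t1 t2 abs_triangle_ineq4[of "\<kappa> * x * N / D^2" "2 * B * x^2 / D"] by linarith
  then show "\<bar>\<kappa> * x * (D * (x + z) - 2 * x - w * (D - 2 * x)) / D^2 - 2 * B * x^2 / D\<bar>
           \<le> (28 * \<bar>\<kappa>\<bar> + 4 * \<bar>B\<bar>) * r * \<bar>x\<bar>" unfolding N_def .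
  show "\<bar>2 * \<kappa> * (1 - w) * x^2 / D^2 + 2 * B * x^2 / D\<bar> \<le> (28 * \<bar>\<kappa>\<bar> + 4 * \<bar>B\<bar>) * r * \<bar>x\<bar>"
    unfolding s using t3 t2 abs_triangle_ineq[of "2 * \<kappa> * (1 - w) * x^2 / D^2" "2 * B * x^2 / D"] by linarith
qed

definition Vf :: "real \<Rightarrow> real \<Rightarrow> real \<Rightarrow> real \<times> real \<times> real \<Rightarrow> real" where
  "Vf b a cw y = 2 * b * (fst (snd y))^2 + 2 * b * fst (snd y) * snd (snd y) - a * (snd (snd y))^2 + cw * (fst y)^2"

definition V'f :: "real \<Rightarrow> real \<Rightarrow> real \<Rightarrow> real \<times> real \<times> real \<Rightarrow> real \<times> real \<times> real \<Rightarrow> real" where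
  "V'f b a cw y h = 4 * b * fst (snd y) * fst (snd h) + 2 * b * (fst (snd h) * snd (snd y) + fst (snd y) * snd (snd h))
     - 2 * a * snd (snd y) * snd (snd h) + 2 * cw * fst y * fst h"

lemma Vf_deriv: "(Vf b a cw has_derivative V'f b a cw y) (at y)"
proof -
  have "((\<lambda>y. Vf b a cw y) has_derivative (\<lambda>h. V'f b a cw y h)) (at y)"
    unfolding Vf_def V'f_def
    by (rule derivative_eq_intros refl | simp)+ (auto simp: algebra_simps)?
  then show ?thesis by simp
qed

lemma quad_pos:
  fixes p q m :: real
  assumes p: "p > 0" and q: "q > 0" and m: "m^2 < 4 * p * q"
  defines "c \<equiv> (4 * p * q - m^2) / (4 * (p + q))"
  shows "c > 0" and "p * x^2 + m * x * z + q * z^2 \<ge> c * (x^2 + z^2)"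
proof -
  show c0: "c > 0" unfolding c_def using p q m by (intro divide_pos_pos) auto
  have cpq: "c * (4 * (p + q)) = 4 * p * q - m^2" unfolding c_def using p q by simp
  have cp: "c \<le> p"
  proof -
    have "p * (4 * (p + q)) = 4 * (p * p) + 4 * p * q" by (simp add: algebra_simps)
    moreover have "p * p > 0" using p by simp
    moreover have "m^2 \<ge> 0" by simp
    ultimately have "c * (4 * (p + q)) \<le> p * (4 * (p + q))" unfolding cpq by linarith
    then show ?thesis using p q by simp
  qed
  have cq: "c \<le> q"
  proof -
    have "q * (4 * (p + q)) = 4 * (q * q) + 4 * p * q" by (simp add: algebra_simps)
    moreover have "q * q > 0" using q by simp
    moreover have "m^2 \<ge> 0" by simp
    ultimately have "c * (4 * (p + q)) \<le> q * (4 * (p + q))" unfolding cpq by linarith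
    then show ?thesis using p q by simp
  qed
  define p' where "p' = p - c"
  define q' where "q' = q - c"
  have p': "p' \<ge> 0" and q': "q' \<ge> 0" unfolding p'_def q'_def using cp cq by auto
  have disc: "m^2 \<le> 4 * p' * q'"
  proof -
    have "4 * p' * q' = 4 * p * q - c * (4 * (p + q)) + 4 * c^2"
      unfolding p'_def q'_def by (simp add: algebra_simps power2_eq_square)
    also have "\<dots> = m^2 + 4 * c^2" unfolding cpq by simp
    finally show ?thesis by simp
  qed
  have nn: "p' * x^2 + m * x * z + q' * z^2 \<ge> 0"
  proof (cases "p' = 0")
    case True
    then have "m^2 \<le> 0" using disc by simp
    then have "m = 0" by simp
    then show ?thesis using True q' by simp
  next
    case False
    then have pp: "p' > 0" using p' by simp
    have id: "4 * p' * (p' * x^2 + m * x * z + q' * z^2) = (2 * p' * x + m * z)^2 + (4 * p' * q' - m^2) * z^2"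
      by (simp add: algebra_simps power2_eq_square)
    have "0 \<le> (2 * p' * x + m * z)^2 + (4 * p' * q' - m^2) * z^2"
      using disc by (intro add_nonneg_nonneg mult_nonneg_nonneg) auto
    then have "0 \<le> (4 * p') * (p' * x^2 + m * x * z + q' * z^2)" using id by simp
    then show ?thesis using pp by (simp add: zero_le_mult_iff)
  qed
  then show "p * x^2 + m * x * z + q * z^2 \<ge> c * (x^2 + z^2)"
    unfolding p'_def q'_def by (simp add: algebra_simps)
qed

lemma Vdot:
  fixes w x z r kk \<alpha> \<beta> \<delta> cw :: real
  assumes r: "r \<le> 1/4" and n: "norm (w, x, z) \<le> r"
  defines "a \<equiv> -(\<delta>+1) + \<alpha> * \<delta> / kk + \<beta> * \<delta>"
    and "b \<equiv> 2 * \<delta>"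
    and "K \<equiv> 28 * \<bar>\<alpha> * \<delta> / kk\<bar> + 4 * \<bar>\<beta> * \<delta>\<bar>"
  assumes b0: "b \<ge> 0"
  shows "\<exists>E. V'f b a cw (w, x, z) (scpw_field kk \<alpha> \<beta> \<delta> (w, x, z))
            = 2 * (2 * a + b) * (b * x^2 + z^2) + cw * (2 * kk * \<delta> * w * x - 2 * w^2) + E
          \<and> \<bar>E\<bar> \<le> K * (8 * b + 2 * \<bar>a\<bar>) * r * (w^2 + x^2 + z^2)"
proof -
  have cb: "\<bar>w\<bar> \<le> r" "\<bar>x\<bar> \<le> r" "\<bar>z\<bar> \<le> r" using comp_bounds[OF n] by simp_all
  define D where "D = 1 - x - z"
  have D0: "D \<noteq> 0" unfolding D_def using cb r by linarith
  define \<kappa> where "\<kappa> = \<alpha> * \<delta> / kk"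
  define B where "B = \<beta> * \<delta>"
  define Rx where "Rx = \<kappa> * x * (D * (x + z) - 2 * x - w * (D - 2 * x)) / D^2 - 2 * B * x^2 / D"
  define Rz where "Rz = 2 * \<kappa> * (1 - w) * x^2 / D^2 + 2 * B * x^2 / D"
  have F: "scpw_field kk \<alpha> \<beta> \<delta> (w, x, z) = (kk * \<delta> * x - w, a * x + z + Rx, b * x - 2 * z + Rz)"
    using decomp[OF D0[unfolded D_def], of kk \<alpha> \<beta> \<delta> w]
    unfolding a_def b_def Rx_def Rz_def \<kappa>_def B_def D_def by simp
  have KK: "K = 28 * \<bar>\<kappa>\<bar> + 4 * \<bar>B\<bar>" unfolding K_def \<kappa>_def B_def ..
  have bx: "\<bar>Rx\<bar> \<le> K * r * \<bar>x\<bar>" "\<bar>Rz\<bar> \<le> K * r * \<bar>x\<bar>"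
    using R_bounds[OF r cb, of \<kappa> B] unfolding KK Rx_def Rz_def D_def by simp_all
  define E where "E = (4 * b * x + 2 * b * z) * Rx + (2 * b * x - 2 * a * z) * Rz"
  have eq: "V'f b a cw (w, x, z) (scpw_field kk \<alpha> \<beta> \<delta> (w, x, z))
            = 2 * (2 * a + b) * (b * x^2 + z^2) + cw * (2 * kk * \<delta> * w * x - 2 * w^2) + E"
    unfolding F V'f_def E_def by (simp add: algebra_simps power2_eq_square)
  have K0: "K \<ge> 0" unfolding K_def by simp
  have r0: "r \<ge> 0" using cb by linarith
  have Kr: "K * r \<ge> 0" using K0 r0 by simp
  have e1: "\<bar>(4 * b * x + 2 * b * z) * Rx\<bar> \<le> (4 * b * \<bar>x\<bar> + 2 * b * \<bar>z\<bar>) * (K * r * \<bar>x\<bar>)"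
  proof (rule absprod[OF _ bx(1)])
    show "\<bar>4 * b * x + 2 * b * z\<bar> \<le> 4 * b * \<bar>x\<bar> + 2 * b * \<bar>z\<bar>"
      using b0 abs_triangle_ineq[of "4 * b * x" "2 * b * z"] by (simp add: abs_mult)
  qed
  have e2: "\<bar>(2 * b * x - 2 * a * z) * Rz\<bar> \<le> (2 * b * \<bar>x\<bar> + 2 * \<bar>a\<bar> * \<bar>z\<bar>) * (K * r * \<bar>x\<bar>)"
  proof (rule absprod[OF _ bx(2)])
    show "\<bar>2 * b * x - 2 * a * z\<bar> \<le> 2 * b * \<bar>x\<bar> + 2 * \<bar>a\<bar> * \<bar>z\<bar>"
      using b0 abs_triangle_ineq4[of "2 * b * x" "2 * a * z"] by (simp add: abs_mult)
  qed
  define N where "N = w^2 + x^2 + z^2"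
  have xxN: "\<bar>x\<bar> * \<bar>x\<bar> \<le> N" unfolding N_def by (simp add: power2_eq_square[symmetric])
  have xzN: "\<bar>x\<bar> * \<bar>z\<bar> \<le> N"
  proof -
    have "2 * (\<bar>x\<bar> * \<bar>z\<bar>) \<le> \<bar>x\<bar>^2 + \<bar>z\<bar>^2"
      using zero_le_power2[of "\<bar>x\<bar> - \<bar>z\<bar>"] by (simp add: power2_eq_square algebra_simps)
    moreover have "\<bar>x\<bar> * \<bar>z\<bar> \<ge> 0" by simp
    moreover have "\<bar>x\<bar>^2 = x^2" "\<bar>z\<bar>^2 = z^2" by simp_all
    ultimately show ?thesis unfolding N_def using zero_le_power2[of w] by linarith
  qed
  have "(4 * b * \<bar>x\<bar> + 2 * b * \<bar>z\<bar>) * (K * r * \<bar>x\<bar>) + (2 * b * \<bar>x\<bar> + 2 * \<bar>a\<bar> * \<bar>z\<bar>) * (K * r * \<bar>x\<bar>)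
      = (K * r) * (6 * b * (\<bar>x\<bar> * \<bar>x\<bar>) + (2 * b + 2 * \<bar>a\<bar>) * (\<bar>x\<bar> * \<bar>z\<bar>))"
    by (simp add: algebra_simps)
  also have "\<dots> \<le> (K * r) * (6 * b * N + (2 * b + 2 * \<bar>a\<bar>) * N)"
    using b0 xxN xzN by (intro mult_left_mono[OF _ Kr] add_mono mult_left_mono) auto
  also have "\<dots> = K * (8 * b + 2 * \<bar>a\<bar>) * r * N" by (simp add: algebra_simps)
  finally have "\<bar>E\<bar> \<le> K * (8 * b + 2 * \<bar>a\<bar>) * r * N"
    using e1 e2 abs_triangle_ineq[of "(4 * b * x + 2 * b * z) * Rx" "(2 * b * x - 2 * a * z) * Rz"]
    unfolding E_def by linarith
  then show ?thesis using eq unfolding N_def by blast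
qed

lemma Vf_eq: "Vf b a cw (w, x, z) = 2 * b * x^2 + 2 * b * x * z - a * z^2 + cw * w^2"
  unfolding Vf_def by simp

lemma cross_bound:
  fixes e k w x :: real
  assumes "e \<ge> 0"
  shows "\<bar>e * (2 * k * w * x)\<bar> \<le> e * w^2 + e * k^2 * x^2"
proof -
  have "\<bar>2 * k * w * x\<bar> \<le> w^2 + k^2 * x^2"
  proof -
    have "0 \<le> (w - k * x)^2" "0 \<le> (w + k * x)^2" by simp_all
    then show ?thesis by (simp add: power2_eq_square algebra_simps abs_le_iff) linarith?
  qed
  then have "e * \<bar>2 * k * w * x\<bar> \<le> e * (w^2 + k^2 * x^2)" using assms by (intro mult_left_mono) auto
  then show ?thesis using assms by (simp add: abs_mult algebra_simps)
qed

lemma Vf_upper: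
  fixes b a cw w x z :: real
  assumes "b \<ge> 0" "\<bar>cw\<bar> \<le> e"
  shows "Vf b a cw (w, x, z) \<le> (3 * b + \<bar>a\<bar> + e + 1) * (w^2 + x^2 + z^2)"
proof -
  have "2 * b * x * z \<le> b * (x^2 + z^2)"
  proof -
    have "2 * x * z \<le> x^2 + z^2" using zero_le_power2[of "x - z"] by (simp add: power2_eq_square algebra_simps)
    then have "b * (2 * x * z) \<le> b * (x^2 + z^2)" using assms by (intro mult_left_mono) auto
    then show ?thesis by (simp add: algebra_simps)
  qed
  moreover have "- a * z^2 \<le> \<bar>a\<bar> * z^2" by (intro mult_right_mono) auto
  moreover have "cw * w^2 \<le> e * w^2" using assms by (intro mult_right_mono) auto
  moreover have "(3 * b) * x^2 \<le> (3 * b + \<bar>a\<bar> + e + 1) * x^2"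
    using assms by (intro mult_right_mono) auto
  moreover have "(b + \<bar>a\<bar>) * z^2 \<le> (3 * b + \<bar>a\<bar> + e + 1) * z^2"
    using assms by (intro mult_right_mono) auto
  moreover have "e * w^2 \<le> (3 * b + \<bar>a\<bar> + e + 1) * w^2"
    using assms by (intro mult_right_mono) auto
  ultimately show ?thesis unfolding Vf_eq by (simp add: algebra_simps)
qed

lemma r_choice:
  fixes Q \<mu> :: real
  assumes "Q \<ge> 0" "\<mu> > 0"
  shows "min (1/4) (\<mu> / (2 * Q + 1)) > 0" "min (1/4) (\<mu> / (2 * Q + 1)) \<le> 1/4"
    "Q * min (1/4) (\<mu> / (2 * Q + 1)) \<le> \<mu> / 2"
proof -
  show "min (1/4) (\<mu> / (2 * Q + 1)) > 0" using assms by simp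
  show "min (1/4) (\<mu> / (2 * Q + 1)) \<le> 1/4" by (rule min.cobounded1)
  have "Q * min (1/4) (\<mu> / (2 * Q + 1)) \<le> Q * (\<mu> / (2 * Q + 1))"
    using assms by (intro mult_left_mono) auto
  also have "\<dots> \<le> \<mu> / 2" using assms by (simp add: field_simps)
  finally show "Q * min (1/4) (\<mu> / (2 * Q + 1)) \<le> \<mu> / 2" .
qed

lemma stable_case:
  fixes k1 \<alpha> \<beta> \<delta> :: real
  defines "a \<equiv> -(\<delta>+1) + \<alpha> * \<delta> / k1 + \<beta> * \<delta>"
  assumes k1: "k1 > 0" and \<delta>: "\<delta> > 0" and \<sigma>: "2 * a + 2 * \<delta> < 0"
  shows "loc_asym_stable (scpw_field k1 \<alpha> \<beta> \<delta>) 0"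
proof -
  define b where "b = 2 * \<delta>"
  define sg where "sg = - (2 * a + b)"
  have b: "b > 0" unfolding b_def using \<delta> by simp
  have sg: "sg > 0" unfolding sg_def b_def using \<sigma> by simp
  define e where "e = sg * b / (k1 * \<delta>)^2"
  have e: "e > 0" unfolding e_def using sg b k1 \<delta> by simp
  have ek: "e * (k1 * \<delta>)^2 = sg * b" unfolding e_def using k1 \<delta> by simp
  define \<mu> where "\<mu> = min (sg * b) (min sg e)"
  have \<mu>: "\<mu> > 0" unfolding \<mu>_def using sg b e by simp
  define K where "K = 28 * \<bar>\<alpha> * \<delta> / k1\<bar> + 4 * \<bar>\<beta> * \<delta>\<bar>"
  define Q where "Q = K * (8 * b + 2 * \<bar>a\<bar>)"
  have Q: "Q \<ge> 0" unfolding Q_def K_def using b by simp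
  define r where "r = min (1/4) (\<mu> / (2 * Q + 1))"
  have r: "r > 0" "r \<le> 1/4" "Q * r \<le> \<mu> / 2" unfolding r_def using r_choice[OF Q \<mu>] by auto
  have a_neg: "a < 0" using \<sigma> \<delta> by simp
  define m where "m = (4 * (2 * b) * (- a) - (2 * b)^2) / (4 * (2 * b + - a))"
  have qp: "m > 0" "\<And>x z. 2 * b * x^2 + 2 * b * x * z + (- a) * z^2 \<ge> m * (x^2 + z^2)"
  proof -
    have "b < -2 * a" using \<sigma> unfolding b_def by simp
    then have "4 * b * b < 4 * b * (-2 * a)" using b by (intro mult_strict_left_mono) auto
    then have h: "(2 * b)^2 < 4 * (2 * b) * (- a)" by (simp add: power2_eq_square algebra_simps)
    show "m > 0" unfolding m_def by (rule quad_pos(1)[OF _ _ h]) (use b a_neg in auto)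
    fix x z :: real
    show "2 * b * x^2 + 2 * b * x * z + (- a) * z^2 \<ge> m * (x^2 + z^2)"
      unfolding m_def by (rule quad_pos(2)[OF _ _ h]) (use b a_neg in auto)
  qed
  define c1 where "c1 = min m e"
  define c2 where "c2 = 3 * b + \<bar>a\<bar> + e + 1"
  have c1: "c1 > 0" unfolding c1_def using qp e by simp
  have c2: "c2 > 0" unfolding c2_def using b e by simp
  define c3 where "c3 = \<mu> / (2 * c2)"
  have c3: "c3 > 0" unfolding c3_def using \<mu> c2 by simp
  show ?thesis
  proof (rule stab_generic[OF _ r(1) c1 c2 c3, where V = "Vf b a e" and V' = "V'f b a e"])
    show "scpw_field k1 \<alpha> \<beta> \<delta> 0 = 0" by (simp add: scpw_field_def zero_prod_def)
  next
    fix y :: "real \<times> real \<times> real" assume ny: "norm y \<le> r"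
    show "(Vf b a e has_derivative V'f b a e y) (at y)" by (rule Vf_deriv)
    obtain w x z where y: "y = (w, x, z)" by (cases y) auto
    have N: "(norm y)^2 = w^2 + x^2 + z^2" unfolding y by (rule norm3_sq)
    have up: "Vf b a e y \<le> c2 * (norm y)^2"
    proof -
      have "Vf b a e (w, x, z) \<le> c2 * (w^2 + x^2 + z^2)" unfolding c2_def
        by (rule Vf_upper) (use b e in auto)
      then show ?thesis unfolding N unfolding y .
    qed
    have lo: "c1 * (norm y)^2 \<le> Vf b a e y"
    proof -
      have "c1 * (w^2 + x^2 + z^2) = c1 * w^2 + c1 * (x^2 + z^2)" by (simp add: algebra_simps)
      also have "\<dots> \<le> e * w^2 + m * (x^2 + z^2)"
        unfolding c1_def by (intro add_mono mult_right_mono) auto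
      also have "\<dots> \<le> Vf b a e y" unfolding y Vf_eq using qp(2)[of x z] by simp
      finally show ?thesis unfolding N .
    qed
    show "c1 * (norm y)^2 \<le> Vf b a e y \<and> Vf b a e y \<le> c2 * (norm y)^2" using up lo by simp
    obtain E where E: "V'f b a e (w, x, z) (scpw_field k1 \<alpha> \<beta> \<delta> (w, x, z))
            = 2 * (2 * a + b) * (b * x^2 + z^2) + e * (2 * k1 * \<delta> * w * x - 2 * w^2) + E"
        "\<bar>E\<bar> \<le> K * (8 * b + 2 * \<bar>a\<bar>) * r * (w^2 + x^2 + z^2)"
    proof -
      have b0': "0 \<le> 2 * \<delta>" using \<delta> by simp
      show ?thesis using that Vdot[where kk=k1 and \<alpha>=\<alpha> and \<beta>=\<beta> and \<delta>=\<delta> and cw=e, OF r(2) ny[unfolded y] b0']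
        unfolding a_def b_def K_def by blast
    qed
    have NN: "w^2 + x^2 + z^2 \<ge> 0" by simp
    have Eb: "\<bar>E\<bar> \<le> \<mu> / 2 * (w^2 + x^2 + z^2)"
    proof -
      have "K * (8 * b + 2 * \<bar>a\<bar>) * r * (w^2 + x^2 + z^2) = (Q * r) * (w^2 + x^2 + z^2)"
        unfolding Q_def by simp
      also have "\<dots> \<le> \<mu> / 2 * (w^2 + x^2 + z^2)" using r(3) NN by (intro mult_right_mono) auto
      finally show ?thesis using E(2) by linarith
    qed
    have cr: "\<bar>e * (2 * (k1 * \<delta>) * w * x)\<bar> \<le> e * w^2 + e * (k1 * \<delta>)^2 * x^2"
      by (rule cross_bound) (use e in simp)
    have cr': "e * (2 * k1 * \<delta> * w * x) \<le> e * w^2 + sg * b * x^2"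
    proof -
      have t: "e * (2 * k1 * \<delta> * w * x) = e * (2 * (k1 * \<delta>) * w * x)" by (simp add: algebra_simps)
      have ek2: "e * (k1 * \<delta>)^2 * x^2 = sg * b * x^2" using ek by simp
      have "e * (2 * (k1 * \<delta>) * w * x) \<le> e * w^2 + sg * b * x^2"
        using cr abs_ge_self[of "e * (2 * (k1 * \<delta>) * w * x)"] ek2 by linarith
      then show ?thesis using t by simp
    qed
    have mu_le: "\<mu> * (w^2 + x^2 + z^2) \<le> sg * b * x^2 + 2 * sg * z^2 + e * w^2"
    proof -
      have "\<mu> * x^2 \<le> (sg * b) * x^2" unfolding \<mu>_def by (intro mult_right_mono) auto
      moreover have "\<mu> * z^2 \<le> (2 * sg) * z^2" unfolding \<mu>_def using sg by (intro mult_right_mono) auto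
      moreover have "\<mu> * w^2 \<le> e * w^2" unfolding \<mu>_def by (intro mult_right_mono) auto
      ultimately show ?thesis by (simp add: algebra_simps)
    qed
    have Vd: "V'f b a e y (scpw_field k1 \<alpha> \<beta> \<delta> y) \<le> - (\<mu> / 2) * (w^2 + x^2 + z^2)"
    proof -
      have "2 * (2 * a + b) * (b * x^2 + z^2) = - 2 * sg * b * x^2 - 2 * sg * z^2"
        unfolding sg_def by (simp add: algebra_simps)
      then show ?thesis unfolding y E(1) using cr' mu_le Eb by (simp add: algebra_simps) linarith?
    qed
    have "c3 * Vf b a e y \<le> c3 * (c2 * (norm y)^2)" using up c3 by (intro mult_left_mono) auto
    also have "c3 * (c2 * (norm y)^2) = (\<mu> / 2) * (w^2 + x^2 + z^2)"
      unfolding c3_def N using c2 by simp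
    finally show "V'f b a e y (scpw_field k1 \<alpha> \<beta> \<delta> y) \<le> - c3 * Vf b a e y"
      using Vd by linarith
  qed
qed

lemma unstable_case:
  fixes k1 \<alpha> \<beta> \<delta> :: real
  defines "a \<equiv> -(\<delta>+1) + \<alpha> * \<delta> / k1 + \<beta> * \<delta>"
  assumes k1: "k1 > 0" and \<delta>: "\<delta> > 0" and \<sigma>: "2 * a + 2 * \<delta> > 0"
  shows "eq_unstable (scpw_field k1 \<alpha> \<beta> \<delta>) 0"
proof -
  define b where "b = 2 * \<delta>"
  define sg where "sg = 2 * a + b"
  have b: "b > 0" unfolding b_def using \<delta> by simp
  have sg: "sg > 0" unfolding sg_def b_def using \<sigma> by simp
  define e where "e = sg * b / (k1 * \<delta>)^2"
  have e: "e > 0" unfolding e_def using sg b k1 \<delta> by simp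
  have ek: "e * (k1 * \<delta>)^2 = sg * b" unfolding e_def using k1 \<delta> by simp
  define \<mu> where "\<mu> = min (sg * b) (min sg e)"
  have \<mu>: "\<mu> > 0" unfolding \<mu>_def using sg b e by simp
  define K where "K = 28 * \<bar>\<alpha> * \<delta> / k1\<bar> + 4 * \<bar>\<beta> * \<delta>\<bar>"
  define Q where "Q = K * (8 * b + 2 * \<bar>a\<bar>)"
  have Q: "Q \<ge> 0" unfolding Q_def K_def using b by simp
  define r where "r = min (1/4) (\<mu> / (2 * Q + 1))"
  have r: "r > 0" "r \<le> 1/4" "Q * r \<le> \<mu> / 2" unfolding r_def using r_choice[OF Q \<mu>] by auto
  define c2 where "c2 = 3 * b + \<bar>a\<bar> + e + 1"
  have c2: "c2 > 0" unfolding c2_def using b e by simp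
  define c3 where "c3 = \<mu> / 2"
  have c3: "c3 > 0" unfolding c3_def using \<mu> by simp
  define F where "F = scpw_field k1 \<alpha> \<beta> \<delta>"
  define S where "S = cball (0::real \<times> real \<times> real) r"
  have S: "convex S" "closed S" "S \<noteq> {}" unfolding S_def using r by auto
  obtain LF where LF: "LF-lipschitz_on S F" using field_lip[OF r(2)] unfolding S_def F_def by blast
  have LF0: "LF \<ge> 0" using lipschitz_on_nonneg[OF LF] .
  define g where "g u = F (closest_point S u)" for u
  have glip: "dist (g u) (g v) \<le> (LF + 1) * dist u v" for u v
  proof -
    have "dist (g u) (g v) \<le> LF * dist (closest_point S u) (closest_point S v)"
      unfolding g_def by (rule lipschitz_onD[OF LF]) (use S closest_point_in_set in auto)
    also have "\<dots> \<le> LF * dist u v" by (intro mult_left_mono closest_point_lipschitz S LF0)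
    also have "\<dots> \<le> (LF + 1) * dist u v" by (simp add: algebra_simps)
    finally show ?thesis .
  qed
  show ?thesis unfolding F_def[symmetric]
  proof (rule instab_generic[OF _ r(1) c2 c3, where V = "Vf b a (- e)" and V' = "V'f b a (- e)" and g = g])
    show "F 0 = 0" unfolding F_def by (simp add: scpw_field_def zero_prod_def)
  next
    fix y0 :: "real \<times> real \<times> real" and T :: real assume "T \<ge> 0"
    then show "\<exists>y. y 0 = y0 \<and> (\<forall>t\<in>{0..T}. (y has_vector_derivative g (y t)) (at t within {0..T}))"
      using picard[OF glip _ \<open>T \<ge> 0\<close>] LF0 by auto
  next
    fix y :: "real \<times> real \<times> real" assume "norm y \<le> r"
    then have "y \<in> S" unfolding S_def by (simp add: dist_norm)
    then show "g y = F y" unfolding g_def by (simp add: closest_point_self)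
  next
    fix \<eta> :: real assume \<eta>: "\<eta> > 0"
    show "\<exists>y0. norm y0 < \<eta> \<and> Vf b a (- e) y0 > 0"
    proof (intro exI[of _ "(0, \<eta>/2, 0)"] conjI)
      have "norm (0::real, \<eta>/2, 0::real) = \<eta>/2" using \<eta> by (simp add: norm_Pair)
      then show "norm (0::real, \<eta>/2, 0::real) < \<eta>" using \<eta> by simp
      show "Vf b a (- e) (0, \<eta>/2, 0) > 0" unfolding Vf_eq using b \<eta> by simp
    qed
  next
    fix y :: "real \<times> real \<times> real" assume ny: "norm y \<le> r"
    show "(Vf b a (- e) has_derivative V'f b a (- e) y) (at y)" by (rule Vf_deriv)
    obtain w x z where y: "y = (w, x, z)" by (cases y) auto
    have N: "(norm y)^2 = w^2 + x^2 + z^2" unfolding y by (rule norm3_sq)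
    show "Vf b a (- e) y \<le> c2 * (norm y)^2"
    proof -
      have "Vf b a (- e) (w, x, z) \<le> c2 * (w^2 + x^2 + z^2)" unfolding c2_def
        by (rule Vf_upper) (use b e in auto)
      then show ?thesis unfolding N unfolding y .
    qed
    obtain E where E: "V'f b a (- e) (w, x, z) (scpw_field k1 \<alpha> \<beta> \<delta> (w, x, z))
            = 2 * (2 * a + b) * (b * x^2 + z^2) + (- e) * (2 * k1 * \<delta> * w * x - 2 * w^2) + E"
        "\<bar>E\<bar> \<le> K * (8 * b + 2 * \<bar>a\<bar>) * r * (w^2 + x^2 + z^2)"
    proof -
      have b0': "0 \<le> 2 * \<delta>" using \<delta> by simp
      show ?thesis using that Vdot[where kk=k1 and \<alpha>=\<alpha> and \<beta>=\<beta> and \<delta>=\<delta> and cw="- e", OF r(2) ny[unfolded y] b0']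
        unfolding a_def b_def K_def by blast
    qed
    have NN: "w^2 + x^2 + z^2 \<ge> 0" by simp
    have Eb: "\<bar>E\<bar> \<le> \<mu> / 2 * (w^2 + x^2 + z^2)"
    proof -
      have "K * (8 * b + 2 * \<bar>a\<bar>) * r * (w^2 + x^2 + z^2) = (Q * r) * (w^2 + x^2 + z^2)"
        unfolding Q_def by simp
      also have "\<dots> \<le> \<mu> / 2 * (w^2 + x^2 + z^2)" using r(3) NN by (intro mult_right_mono) auto
      finally show ?thesis using E(2) by linarith
    qed
    have cr: "\<bar>e * (2 * (k1 * \<delta>) * w * x)\<bar> \<le> e * w^2 + e * (k1 * \<delta>)^2 * x^2"
      by (rule cross_bound) (use e in simp)
    have cr': "e * (2 * k1 * \<delta> * w * x) \<le> e * w^2 + sg * b * x^2"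
    proof -
      have t: "e * (2 * k1 * \<delta> * w * x) = e * (2 * (k1 * \<delta>) * w * x)" by (simp add: algebra_simps)
      have ek2: "e * (k1 * \<delta>)^2 * x^2 = sg * b * x^2" using ek by simp
      have "e * (2 * (k1 * \<delta>) * w * x) \<le> e * w^2 + sg * b * x^2"
        using cr abs_ge_self[of "e * (2 * (k1 * \<delta>) * w * x)"] ek2 by linarith
      then show ?thesis using t by simp
    qed
    have mu_le: "\<mu> * (w^2 + x^2 + z^2) \<le> sg * b * x^2 + 2 * sg * z^2 + e * w^2"
    proof -
      have "\<mu> * x^2 \<le> (sg * b) * x^2" unfolding \<mu>_def by (intro mult_right_mono) auto
      moreover have "\<mu> * z^2 \<le> (2 * sg) * z^2" unfolding \<mu>_def using sg by (intro mult_right_mono) auto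
      moreover have "\<mu> * w^2 \<le> e * w^2" unfolding \<mu>_def by (intro mult_right_mono) auto
      ultimately show ?thesis by (simp add: algebra_simps)
    qed
    have "2 * (2 * a + b) * (b * x^2 + z^2) = 2 * sg * b * x^2 + 2 * sg * z^2"
      unfolding sg_def by (simp add: algebra_simps)
    then have "V'f b a (- e) y (F y) \<ge> (\<mu> / 2) * (w^2 + x^2 + z^2)"
      unfolding y F_def E(1) using cr' mu_le Eb abs_ge_minus_self[of E] by (simp add: algebra_simps) linarith?
    then show "V'f b a (- e) y (F y) \<ge> c3 * (norm y)^2" unfolding c3_def N .
  qed
qed

theorem mainTheorem1:
  fixes p :: "nat \<Rightarrow> real" and k1 k2 k3 \<alpha> \<beta> \<delta> \<delta>c :: real
  assumes p_nonneg: "\<forall>n. p n \<ge> 0"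
    and p_sum: "p sums 1"
    and p_mom3: "summable (\<lambda>n. real n ^ 3 * p n)"
    and k1_def: "k1 = (\<Sum>n. real n * p n)"
    and k2_def: "k2 = (\<Sum>n. real n ^ 2 * p n)"
    and k3_def: "k3 = (\<Sum>n. real n ^ 3 * p n)"
    and k1_pos: "k1 > 0"
    and var_pos: "k2 - k1^2 > 0"
    and k2_gt: "k2 > k1"
    and \<alpha>_def: "\<alpha> = (k2^2 - k1 * k3) / (k2 - k1^2)"
    and \<beta>_def: "\<beta> = (k3 - k2 * k1) / (k2 - k1^2) - 1"
    and \<delta>_pos: "\<delta> > 0"
    and \<delta>c_def: "\<delta>c = k1 / (k2 - k1)"
  shows "(\<delta> < \<delta>c \<longrightarrow> loc_asym_stable (scpw_field k1 \<alpha> \<beta> \<delta>) (0, 0, 0))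
       \<and> (\<delta> > \<delta>c \<longrightarrow> eq_unstable (scpw_field k1 \<alpha> \<beta> \<delta>) (0, 0, 0))"
proof -
  have z: "(0::real, 0::real, 0::real) = 0" by (simp add: zero_prod_def)
  have id: "\<alpha> / k1 + \<beta> = k2 / k1 - 1"
  proof -
    have V: "k2 - k1^2 \<noteq> 0" using var_pos by simp
    have gen: "(A / W) / k + (Bn / W - 1) = (A + k * Bn) / (k * W) - 1" if "W \<noteq> 0" "k \<noteq> 0" for A W k Bn :: real
      using that by (simp add: field_simps)
    have "\<alpha> / k1 + \<beta> = ((k2^2 - k1 * k3) + k1 * (k3 - k2 * k1)) / (k1 * (k2 - k1^2)) - 1"
      unfolding \<alpha>_def \<beta>_def by (rule gen) (use V k1_pos in auto)
    also have "(k2^2 - k1 * k3) + k1 * (k3 - k2 * k1) = k2 * (k2 - k1^2)"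
      by (simp add: algebra_simps power2_eq_square)
    also have "k2 * (k2 - k1^2) / (k1 * (k2 - k1^2)) = k2 / k1" using V k1_pos by simp
    finally show ?thesis .
  qed
  define a where "a = -(\<delta>+1) + \<alpha> * \<delta> / k1 + \<beta> * \<delta>"
  have aeq: "2 * a + 2 * \<delta> = 2 * (\<delta> * (k2 - k1) / k1) - 2"
  proof -
    have "\<alpha> * \<delta> / k1 + \<beta> * \<delta> = \<delta> * (\<alpha> / k1 + \<beta>)" by (simp add: algebra_simps)
    also have "\<dots> = \<delta> * (k2 - k1) / k1" unfolding id using k1_pos by (simp add: field_simps)
    finally show ?thesis unfolding a_def by simp
  qed
  have d: "k2 - k1 > 0" using k2_gt by simp
  show ?thesis
  proof (intro conjI impI)
    assume "\<delta> < \<delta>c"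
    then have "\<delta> * (k2 - k1) < k1" unfolding \<delta>c_def using d by (simp add: pos_less_divide_eq)
    then have "\<delta> * (k2 - k1) / k1 < 1" using k1_pos by simp
    then have "2 * a + 2 * \<delta> < 0" using aeq by simp
    then show "loc_asym_stable (scpw_field k1 \<alpha> \<beta> \<delta>) (0, 0, 0)"
      unfolding z a_def by (rule stable_case[OF k1_pos \<delta>_pos])
  next
    assume "\<delta> > \<delta>c"
    then have "\<delta> * (k2 - k1) > k1" unfolding \<delta>c_def using d by (simp add: pos_divide_less_eq)
    then have "\<delta> * (k2 - k1) / k1 > 1" using k1_pos by simp
    then have "2 * a + 2 * \<delta> > 0" using aeq by simp
    then show "eq_unstable (scpw_field k1 \<alpha> \<beta> \<delta>) (0, 0, 0)"
      unfolding z a_def by (rule unstable_case[OF k1_pos \<delta>_pos])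
  qed
qed

end
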